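(* Let $d\geqslant2$ be an integer, let $V$ be a finite set with $|V|\geqslant d$, let $G$ be a $d$-uniform hypergraph on $V$, let $\boldsymbol{X}_G=\langle X^G_s:s\in\binom{\mathbb{N}}{d}\rangle$ be the random array associated with $G$, and for every integer $n\geqslant 2d$ let $\boldsymbol{X}_{G,n}=\langle X^G_s:s\in\binom{[n]}{d}\rangle$. Let $\varrho,\vartheta>0$. Then: (i) if $G$ is $\varrho$-box uniform, then for every integer $n\geqslant 2d$ the random array $\boldsymbol{X}_{G,n}$ is $(2^d\varrho,\{1\})$-box independent; (ii) conversely, if $\boldsymbol{X}_{G,n}$ is $(\vartheta,\{1\})$-box independent for some (equivalently, every) integer $n\geqslant 2d$, then $G$ is $(12\,\vartheta^{1/8^d})$-box uniform.
   Context: Let $\mathcal{G}=\{(v_1,\dots,v_d)\in V^d:\{v_1,\dots,v_d\}\in G\}$. Let $(\xi_i)_{i\geqslant1}$ be i.i.d. random variables uniformly distributed on $V$; the associated random array is defined by $X^G_s=\mathbf{1}_{\mathcal{G}}(\xi_{i_1},\dots,\xi_{i_d})$ for $s=\{i_1<\dots<i_d\}$. Viewing $V$ with the uniform probability measure and $V^{2d}$ with the product measure $\boldsymbol{\mu}$, the box norm of $f\colon V^d\to\mathbb{R}$ is $\|f\|_\square=\big(\int\prod_{\boldsymbol{\epsilon}\in\{0,1\}^d}f(\boldsymbol{\omega}_{\boldsymbol{\epsilon}})\,d\boldsymbol{\mu}(\boldsymbol{\omega})\big)^{1/2^d}$, where for $\boldsymbol{\omega}=(\omega_1^0,\omega_1^1,\dots,\omega_d^0,\omega_d^1)$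 and $\boldsymbol{\epsilon}=(\epsilon_1,\dots,\epsilon_d)$, $\boldsymbol{\omega}_{\boldsymbol{\epsilon}}=(\omega_1^{\epsilon_1},\dots,\omega_d^{\epsilon_d})$. $G$ is $\varrho$-box uniform if $\|\mathbf{1}_{\mathcal{G}}-\mathbb{E}[\mathbf{1}_{\mathcal{G}}]\|_\square\leqslant\varrho$. A $d$-dimensional box of $[n]$ is $\{s\in\binom{[n]}{d}:|s\cap H_i|=1\ \forall i\in[d]\}$ for 2-element sets $H_1,\dots,H_d\subseteq[n]$ with $\max(H_i)<\min(H_{i+1})$. A $\{0,1\}$-valued random array $\boldsymbol{X}$ on $[n]$ is $(\vartheta,\{1\})$-box independent if for every $d$-dimensional box $B$ of $[n]$, $\mathbb{P}(\bigcap_{s\in B}[X_s=1])\leqslant\prod_{s\in B}\mathbb{P}([X_s=1])+\vartheta$. *)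

theory Defs
  imports "HOL-Probability.Probability"
begin

definition tuples :: "nat \<Rightarrow> 'a set \<Rightarrow> (nat \<Rightarrow> 'a) set" where
  "tuples d V = {..<d} \<rightarrow>\<^sub>E V"

definition uniform_hypergraph :: "nat \<Rightarrow> 'a set \<Rightarrow> 'a set set \<Rightarrow> bool" where
  "uniform_hypergraph d V G \<longleftrightarrow> (\<forall>e\<in>G. e \<subseteq> V \<and> card e = d)"

definition curlyG :: "nat \<Rightarrow> 'a set \<Rightarrow> 'a set set \<Rightarrow> (nat \<Rightarrow> 'a) set" where
  "curlyG d V G = {v \<in> tuples d V. v ` {..<d} \<in> G}"

definition avg :: "nat \<Rightarrow> 'a set \<Rightarrow> ((nat \<Rightarrow> 'a) \<Rightarrow> real) \<Rightarrow> real" where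
  "avg d V f = (\<Sum>v\<in>tuples d V. f v) / real (card V) ^ d"

text \<open>Box norm of f : V^d -> R, with omega in V^(2d) encoded as nat => bool => 'a.\<close>
definition box_norm :: "nat \<Rightarrow> 'a set \<Rightarrow> ((nat \<Rightarrow> 'a) \<Rightarrow> real) \<Rightarrow> real" where
  "box_norm d V f = root (2 ^ d)
     ((\<Sum>\<omega> \<in> {..<d} \<rightarrow>\<^sub>E ((UNIV :: bool set) \<rightarrow>\<^sub>E V).
        \<Prod>\<epsilon> \<in> {..<d} \<rightarrow>\<^sub>E (UNIV :: bool set). f (\<lambda>i\<in>{..<d}. \<omega> i (\<epsilon> i)))
      / real (card V) ^ (2 * d))"

definition box_uniform :: "nat \<Rightarrow> 'a set \<Rightarrow> 'a set set \<Rightarrow> real \<Rightarrow> bool" where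
  "box_uniform d V G \<rho> \<longleftrightarrow>
     box_norm d V (\<lambda>v. indicator (curlyG d V G) v - avg d V (indicator (curlyG d V G))) \<le> \<rho>"

text \<open>The random array: X_s = 1_curlyG(xi_{i_1},...,xi_{i_d}) for s = {i_1 < ... < i_d}.\<close>
definition Xarr :: "nat \<Rightarrow> 'a set \<Rightarrow> 'a set set \<Rightarrow> (nat \<Rightarrow> 'a) \<Rightarrow> nat set \<Rightarrow> real" where
  "Xarr d V G \<xi> s = indicator (curlyG d V G) (\<lambda>j\<in>{..<d}. \<xi> (sorted_list_of_set s ! j))"

definition prob_xi :: "nat \<Rightarrow> 'a set \<Rightarrow> ((nat \<Rightarrow> 'a) \<Rightarrow> bool) \<Rightarrow> real" where
  "prob_xi n V P = measure_pmf.prob (pmf_of_set ({1..n} \<rightarrow>\<^sub>E V)) {\<xi>. P \<xi>}"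

definition box_family :: "nat \<Rightarrow> nat \<Rightarrow> (nat \<Rightarrow> nat set) \<Rightarrow> bool" where
  "box_family d n H \<longleftrightarrow> (\<forall>i<d. H i \<subseteq> {1..n} \<and> card (H i) = 2) \<and>
     (\<forall>i. Suc i < d \<longrightarrow> Max (H i) < Min (H (Suc i)))"

definition box :: "nat \<Rightarrow> nat \<Rightarrow> (nat \<Rightarrow> nat set) \<Rightarrow> nat set set" where
  "box d n H = {s. s \<subseteq> {1..n} \<and> card s = d \<and> (\<forall>i<d. card (s \<inter> H i) = 1)}"

definition box_independent :: "nat \<Rightarrow> 'a set \<Rightarrow> 'a set set \<Rightarrow> nat \<Rightarrow> real \<Rightarrow> bool" where
  "box_independent d V G n \<theta> \<longleftrightarrow>
     (\<forall>H. box_family d n H \<longrightarrow>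
        prob_xi n V (\<lambda>\<xi>. \<forall>s\<in>box d n H. Xarr d V G \<xi> s = 1)
          \<le> (\<Prod>s\<in>box d n H. prob_xi n V (\<lambda>\<xi>. Xarr d V G \<xi> s = 1)) + \<theta>)"

end

theory Submission
  imports Defs
begin


definition Om :: "nat \<Rightarrow> 'a set \<Rightarrow> (nat \<Rightarrow> bool \<Rightarrow> 'a) set" where
  "Om d V = {..<d} \<rightarrow>\<^sub>E ((UNIV::bool set) \<rightarrow>\<^sub>E V)"
definition Es :: "nat \<Rightarrow> (nat \<Rightarrow> bool) set" where
  "Es d = {..<d} \<rightarrow>\<^sub>E (UNIV :: bool set)"
definition pt :: "nat \<Rightarrow> (nat \<Rightarrow> bool \<Rightarrow> 'a) \<Rightarrow> (nat \<Rightarrow> bool) \<Rightarrow> nat \<Rightarrow> 'a" where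
  "pt d w \<epsilon> = (\<lambda>i\<in>{..<d}. w i (\<epsilon> i))"
definition gip :: "nat \<Rightarrow> 'a set \<Rightarrow> ((nat \<Rightarrow> bool) \<Rightarrow> (nat \<Rightarrow> 'a) \<Rightarrow> real) \<Rightarrow> real" where
  "gip d V F = (\<Sum>w\<in>Om d V. \<Prod>\<epsilon>\<in>Es d. F \<epsilon> (pt d w \<epsilon>))"

lemma finite_Om: "finite V \<Longrightarrow> finite (Om d V)"
  unfolding Om_def by (intro finite_PiE) auto
lemma finite_Es: "finite (Es d)"
  unfolding Es_def by (intro finite_PiE) auto

lemma gip_cong: "(\<And>\<epsilon>. \<epsilon> \<in> Es d \<Longrightarrow> F \<epsilon> = F' \<epsilon>) \<Longrightarrow> gip d V F = gip d V F'"
  unfolding gip_def by simp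

lemma sum_split_Om:
  assumes i: "i < d" and V: "finite V"
  shows "(\<Sum>w\<in>Om d V. h w) =
    (\<Sum>\<rho>\<in>({..<d}-{i}) \<rightarrow>\<^sub>E ((UNIV::bool set) \<rightarrow>\<^sub>E V). \<Sum>x\<in>V. \<Sum>y\<in>V. h (\<rho>(i := (\<lambda>b. if b then y else x))))"
proof -
  let ?Oi = "({..<d}-{i}) \<rightarrow>\<^sub>E ((UNIV::bool set) \<rightarrow>\<^sub>E V)"
  let ?g = "\<lambda>(\<rho>, x, y). \<rho>(i := (\<lambda>b::bool. if b then y else x))"
  define g' where "g' = (\<lambda>w::nat \<Rightarrow> bool \<Rightarrow> 'a. (w(i := undefined), w i False, w i True))"
  have bij: "bij_betw ?g (?Oi \<times> V \<times> V) (Om d V)"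
  proof (rule bij_betw_byWitness[where f' = g'])
    show "\<forall>a\<in>?Oi \<times> V \<times> V. g' (?g a) = a"
      by (auto simp: g'_def PiE_def extensional_def fun_eq_iff)
    show "\<forall>a\<in>Om d V. ?g (g' a) = a"
      by (auto simp: g'_def Om_def fun_eq_iff)
    show "?g ` (?Oi \<times> V \<times> V) \<subseteq> Om d V"
      using i by (auto simp: Om_def PiE_def extensional_def Pi_def)
    show "g' ` Om d V \<subseteq> ?Oi \<times> V \<times> V"
      using i by (auto simp: g'_def Om_def PiE_def extensional_def Pi_def)
  qed
  have "(\<Sum>w\<in>Om d V. h w) = (\<Sum>p\<in>?Oi \<times> V \<times> V. h (?g p))"
    using sum.reindex_bij_betw[OF bij, of h] by simp
  also have "\<dots> = (\<Sum>\<rho>\<in>?Oi. \<Sum>x\<in>V. \<Sum>y\<in>V. h (?g (\<rho>, x, y)))"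
    by (simp add: sum.cartesian_product')
  finally show ?thesis by simp
qed

definition E0 :: "nat \<Rightarrow> nat \<Rightarrow> (nat \<Rightarrow> bool) set" where
  "E0 d i = {\<epsilon>\<in>Es d. \<not> \<epsilon> i}"
definition sig :: "((nat \<Rightarrow> bool) \<Rightarrow> 'b) \<Rightarrow> nat \<Rightarrow> bool \<Rightarrow> (nat \<Rightarrow> bool) \<Rightarrow> 'b" where
  "sig F i b = (\<lambda>\<epsilon>. F (\<epsilon>(i := b)))"
definition Q :: "nat \<Rightarrow> nat \<Rightarrow> ((nat \<Rightarrow> bool) \<Rightarrow> (nat \<Rightarrow> 'a) \<Rightarrow> real) \<Rightarrow> (nat \<Rightarrow> bool \<Rightarrow> 'a) \<Rightarrow> 'a \<Rightarrow> real" where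
  "Q d i G \<rho> x = (\<Prod>\<epsilon>\<in>E0 d i. G \<epsilon> (pt d (\<rho>(i := (\<lambda>_. x))) \<epsilon>))"

lemma upd_Es: "i < d \<Longrightarrow> \<epsilon> \<in> Es d \<Longrightarrow> \<epsilon>(i := b) \<in> Es d"
  using PiE_fun_upd[of b "\<lambda>_. UNIV" i \<epsilon> "{..<d}"] by (simp add: Es_def insert_absorb)

lemma Es_split1:
  assumes "i < d"
  shows "Es d = E0 d i \<union> (\<lambda>\<epsilon>. \<epsilon>(i := True)) ` E0 d i"
proof (rule equalityI)
  show "Es d \<subseteq> E0 d i \<union> (\<lambda>\<epsilon>. \<epsilon>(i := True)) ` E0 d i"
  proof (rule subsetI)
    fix \<epsilon> assume e: "\<epsilon> \<in> Es d"
    show "\<epsilon> \<in> E0 d i \<union> (\<lambda>\<epsilon>. \<epsilon>(i := True)) ` E0 d i"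
    proof (cases "\<epsilon> i")
      case True
      have "\<epsilon>(i := False) \<in> E0 d i" using upd_Es[OF assms e] by (simp add: E0_def)
      moreover have "\<epsilon> = (\<epsilon>(i := False))(i := True)" using True by (auto simp: fun_eq_iff)
      ultimately show ?thesis by (intro UnI2) (rule image_eqI)
    next
      case False
      then show ?thesis using e by (simp add: E0_def)
    qed
  qed
  show "E0 d i \<union> (\<lambda>\<epsilon>. \<epsilon>(i := True)) ` E0 d i \<subseteq> Es d"
    using upd_Es[OF assms] by (auto simp: E0_def)
qed

lemma Es_split2: "E0 d i \<inter> (\<lambda>\<epsilon>. \<epsilon>(i := True)) ` E0 d i = {}"
  by (auto simp: E0_def)

lemma Es_split3: "inj_on (\<lambda>\<epsilon>. \<epsilon>(i := True)) (E0 d i)"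
proof (rule inj_onI)
  fix a b assume a: "a \<in> E0 d i" and b: "b \<in> E0 d i" and eq: "a(i := True) = b(i := True)"
  have "a = (a(i := True))(i := False)" using a by (auto simp: E0_def fun_eq_iff)
  also have "\<dots> = (b(i := True))(i := False)" using eq by simp
  also have "\<dots> = b" using b by (auto simp: E0_def fun_eq_iff)
  finally show "a = b" .
qed

lemma gip_decomp:
  assumes i: "i < d" and V: "finite V"
  shows "gip d V F = (\<Sum>\<rho>\<in>({..<d}-{i}) \<rightarrow>\<^sub>E ((UNIV::bool set) \<rightarrow>\<^sub>E V).
           (\<Sum>x\<in>V. Q d i (sig F i False) \<rho> x) * (\<Sum>y\<in>V. Q d i (sig F i True) \<rho> y))"
proof -
  have key: "(\<Prod>\<epsilon>\<in>Es d. F \<epsilon> (pt d (\<rho>(i := (\<lambda>b. if b then y else x))) \<epsilon>))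
       = Q d i (sig F i False) \<rho> x * Q d i (sig F i True) \<rho> y" for \<rho> x y
  proof -
    let ?w = "\<rho>(i := (\<lambda>b. if b then y else x))"
    have fin: "finite (E0 d i)" using finite_Es[of d] by (auto simp: E0_def)
    have "(\<Prod>\<epsilon>\<in>Es d. F \<epsilon> (pt d ?w \<epsilon>)) =
          (\<Prod>\<epsilon>\<in>E0 d i. F \<epsilon> (pt d ?w \<epsilon>)) * (\<Prod>\<epsilon>\<in>(\<lambda>\<epsilon>. \<epsilon>(i := True)) ` E0 d i. F \<epsilon> (pt d ?w \<epsilon>))"
      using Es_split1[OF i] Es_split2 fin by (simp add: prod.union_disjoint)
    also have "(\<Prod>\<epsilon>\<in>(\<lambda>\<epsilon>. \<epsilon>(i := True)) ` E0 d i. F \<epsilon> (pt d ?w \<epsilon>)) =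
         (\<Prod>\<epsilon>\<in>E0 d i. F (\<epsilon>(i := True)) (pt d ?w (\<epsilon>(i := True))))"
      using Es_split3 by (simp add: prod.reindex)
    also have "\<dots> = Q d i (sig F i True) \<rho> y"
      unfolding Q_def sig_def
    proof (rule prod.cong)
      fix \<epsilon> assume "\<epsilon> \<in> E0 d i"
      have "pt d ?w (\<epsilon>(i := True)) = pt d (\<rho>(i := (\<lambda>_. y))) \<epsilon>"
        unfolding pt_def by (rule restrict_ext) auto
      then show "F (\<epsilon>(i := True)) (pt d ?w (\<epsilon>(i := True))) = F (\<epsilon>(i := True)) (pt d (\<rho>(i := (\<lambda>_. y))) \<epsilon>)"
        by simp
    qed simp
    also have "(\<Prod>\<epsilon>\<in>E0 d i. F \<epsilon> (pt d ?w \<epsilon>)) = Q d i (sig F i False) \<rho> x"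
      unfolding Q_def sig_def
    proof (rule prod.cong)
      fix \<epsilon> assume "\<epsilon> \<in> E0 d i"
      then have "\<not> \<epsilon> i" by (auto simp: E0_def)
      then have "\<epsilon>(i := False) = \<epsilon>" by (simp add: fun_upd_idem_iff)
      moreover have "pt d ?w \<epsilon> = pt d (\<rho>(i := (\<lambda>_. x))) \<epsilon>"
        using \<open>\<not> \<epsilon> i\<close> unfolding pt_def by (intro restrict_ext) auto
      ultimately show "F \<epsilon> (pt d ?w \<epsilon>) = F (\<epsilon>(i := False)) (pt d (\<rho>(i := (\<lambda>_. x))) \<epsilon>)" by simp
    qed simp
    finally show ?thesis .
  qed
  have "gip d V F = (\<Sum>\<rho>\<in>({..<d}-{i}) \<rightarrow>\<^sub>E ((UNIV::bool set) \<rightarrow>\<^sub>E V). \<Sum>x\<in>V. \<Sum>y\<in>V.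
            \<Prod>\<epsilon>\<in>Es d. F \<epsilon> (pt d (\<rho>(i := (\<lambda>b. if b then y else x))) \<epsilon>))"
    unfolding gip_def by (rule sum_split_Om[OF i V])
  also have "\<dots> = (\<Sum>\<rho>\<in>({..<d}-{i}) \<rightarrow>\<^sub>E ((UNIV::bool set) \<rightarrow>\<^sub>E V). \<Sum>x\<in>V. \<Sum>y\<in>V.
            Q d i (sig F i False) \<rho> x * Q d i (sig F i True) \<rho> y)"
    by (simp only: key)
  also have "\<dots> = (\<Sum>\<rho>\<in>({..<d}-{i}) \<rightarrow>\<^sub>E ((UNIV::bool set) \<rightarrow>\<^sub>E V).
           (\<Sum>x\<in>V. Q d i (sig F i False) \<rho> x) * (\<Sum>y\<in>V. Q d i (sig F i True) \<rho> y))"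
    by (simp only: sum_product)
  finally show ?thesis .
qed

lemma sig_sig: "sig (sig F i b) i b' = sig F i b"
  by (simp add: sig_def)

lemma gip_sig_square:
  assumes i: "i < d" and V: "finite V"
  shows "gip d V (sig F i b) = (\<Sum>\<rho>\<in>({..<d}-{i}) \<rightarrow>\<^sub>E ((UNIV::bool set) \<rightarrow>\<^sub>E V).
           (\<Sum>x\<in>V. Q d i (sig F i b) \<rho> x)\<^sup>2)"
proof -
  have "gip d V (sig F i b) = (\<Sum>\<rho>\<in>({..<d}-{i}) \<rightarrow>\<^sub>E ((UNIV::bool set) \<rightarrow>\<^sub>E V).
           (\<Sum>x\<in>V. Q d i (sig (sig F i b) i False) \<rho> x) * (\<Sum>y\<in>V. Q d i (sig (sig F i b) i True) \<rho> y))"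
    by (rule gip_decomp[OF i V])
  then show ?thesis by (simp only: sig_sig power2_eq_square)
qed

lemma gip_sig_nonneg:
  assumes i: "i < d" and V: "finite V"
  shows "0 \<le> gip d V (sig F i b)"
  unfolding gip_sig_square[OF i V] by (simp add: sum_nonneg)

lemma gip_CS:
  assumes i: "i < d" and V: "finite V"
  shows "(gip d V F)\<^sup>2 \<le> gip d V (sig F i False) * gip d V (sig F i True)"
proof -
  let ?O = "({..<d}-{i}) \<rightarrow>\<^sub>E ((UNIV::bool set) \<rightarrow>\<^sub>E V)"
  have "(gip d V F)\<^sup>2 = (\<Sum>\<rho>\<in>?O.
           (\<Sum>x\<in>V. Q d i (sig F i False) \<rho> x) * (\<Sum>y\<in>V. Q d i (sig F i True) \<rho> y))\<^sup>2"
    by (simp only: gip_decomp[OF i V, of F])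
  also have "\<dots> \<le> (\<Sum>\<rho>\<in>?O. (\<Sum>x\<in>V. Q d i (sig F i False) \<rho> x)\<^sup>2) * (\<Sum>\<rho>\<in>?O. (\<Sum>y\<in>V. Q d i (sig F i True) \<rho> y)\<^sup>2)"
    by (rule Cauchy_Schwarz_ineq_sum)
  also have "\<dots> = gip d V (sig F i False) * gip d V (sig F i True)"
    by (simp only: gip_sig_square[OF i V])
  finally show ?thesis .
qed

definition mrg :: "nat \<Rightarrow> (nat \<Rightarrow> bool) \<Rightarrow> (nat \<Rightarrow> bool) \<Rightarrow> (nat \<Rightarrow> bool)" where
  "mrg k \<eta> \<epsilon> = (\<lambda>j. if j < k then \<eta> j else \<epsilon> j)"

lemma sig_mrg: "sig (\<lambda>\<epsilon>. F (mrg k \<eta> \<epsilon>)) k b = (\<lambda>\<epsilon>. F (mrg (Suc k) (\<eta>(k := b)) \<epsilon>))"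
proof (rule ext)
  fix \<epsilon>
  have "mrg k \<eta> (\<epsilon>(k := b)) = mrg (Suc k) (\<eta>(k := b)) \<epsilon>"
    unfolding mrg_def by (rule ext) auto
  then show "sig (\<lambda>\<epsilon>. F (mrg k \<eta> \<epsilon>)) k b \<epsilon> = F (mrg (Suc k) (\<eta>(k := b)) \<epsilon>)"
    by (simp add: sig_def)
qed

lemma gip_const_nonneg:
  assumes "0 < d" "finite V"
  shows "0 \<le> gip d V (\<lambda>_. f)"
proof -
  have "sig (\<lambda>_. f) 0 False = (\<lambda>_. f)" by (simp add: sig_def)
  then show ?thesis using gip_sig_nonneg[OF assms, of "\<lambda>_. f" False] by simp
qed

lemma Es_Suc:
  "Es (Suc k) = (\<lambda>(y, g). g(k := y)) ` (UNIV \<times> Es k)"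
  "inj_on (\<lambda>(y, g). g(k := y)) (UNIV \<times> Es k)"
proof -
  have "Es (Suc k) = Pi\<^sub>E (insert k {..<k}) (\<lambda>_. UNIV)"
    by (simp add: Es_def lessThan_Suc)
  then show "Es (Suc k) = (\<lambda>(y, g). g(k := y)) ` (UNIV \<times> Es k)"
    using PiE_insert_eq[of k "{..<k}" "\<lambda>_. UNIV :: bool set"] by (simp add: Es_def)
  show "inj_on (\<lambda>(y, g). g(k := y)) (UNIV \<times> Es k)"
    using inj_combinator[of k "{..<k}" "\<lambda>_. UNIV :: bool set"] by (simp add: Es_def)
qed

lemma prod_Es_Suc:
  "(\<Prod>\<eta>\<in>Es (Suc k). P \<eta>) = (\<Prod>\<eta>\<in>Es k. P (\<eta>(k := False)) * P (\<eta>(k := True)))"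
proof -
  have "(\<Prod>\<eta>\<in>Es (Suc k). P \<eta>) = (\<Prod>p\<in>UNIV \<times> Es k. P ((\<lambda>(y, g). g(k := y)) p))"
    unfolding Es_Suc(1) using prod.reindex[OF Es_Suc(2), of P] by (simp only: comp_def)
  also have "\<dots> = (\<Prod>y\<in>UNIV. \<Prod>g\<in>Es k. P (g(k := y)))"
    by (simp add: prod.cartesian_product')
  also have "\<dots> = (\<Prod>g\<in>Es k. P (g(k := False))) * (\<Prod>g\<in>Es k. P (g(k := True)))"
    by (simp add: UNIV_bool)
  also have "\<dots> = (\<Prod>\<eta>\<in>Es k. P (\<eta>(k := False)) * P (\<eta>(k := True)))"
    by (simp only: prod.distrib)
  finally show ?thesis .
qed

lemma GCS_iter:
  assumes V: "finite V"
  shows "k \<le> d \<Longrightarrow> \<bar>gip d V F\<bar> ^ (2 ^ k) \<le> \<bar>\<Prod>\<eta>\<in>Es k. gip d V (\<lambda>\<epsilon>. F (mrg k \<eta> \<epsilon>))\<bar>"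
proof (induction k)
  case 0
  have "Es 0 = {\<lambda>_. undefined}" by (simp add: Es_def)
  moreover have "(\<lambda>\<epsilon>. F (mrg 0 \<eta> \<epsilon>)) = F" for \<eta> by (simp add: mrg_def)
  ultimately show ?case by simp
next
  case (Suc k)
  then have k: "k < d" by simp
  let ?P = "\<lambda>\<eta>. gip d V (\<lambda>\<epsilon>. F (mrg k \<eta> \<epsilon>))"
  let ?P' = "\<lambda>\<eta>. gip d V (\<lambda>\<epsilon>. F (mrg (Suc k) \<eta> \<epsilon>))"
  have IH: "\<bar>gip d V F\<bar> ^ (2 ^ k) \<le> \<bar>\<Prod>\<eta>\<in>Es k. ?P \<eta>\<bar>" using Suc by simp
  have "\<bar>gip d V F\<bar> ^ (2 ^ Suc k) = (\<bar>gip d V F\<bar> ^ (2 ^ k))\<^sup>2"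
    by (simp add: power_mult[symmetric] mult.commute)
  also have "\<dots> \<le> (\<bar>\<Prod>\<eta>\<in>Es k. ?P \<eta>\<bar>)\<^sup>2"
    by (rule power_mono[OF IH]) simp
  also have "\<dots> = (\<Prod>\<eta>\<in>Es k. (?P \<eta>)\<^sup>2)"
    by (simp add: power2_abs prod_power_distrib)
  also have "\<dots> \<le> (\<Prod>\<eta>\<in>Es k. ?P' (\<eta>(k := False)) * ?P' (\<eta>(k := True)))"
  proof (rule prod_mono)
    fix \<eta> assume "\<eta> \<in> Es k"
    show "0 \<le> (?P \<eta>)\<^sup>2 \<and> (?P \<eta>)\<^sup>2 \<le> ?P' (\<eta>(k := False)) * ?P' (\<eta>(k := True))"
      using gip_CS[OF k V, of "\<lambda>\<epsilon>. F (mrg k \<eta> \<epsilon>)"] by (simp add: sig_mrg)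
  qed
  also have "\<dots> = (\<Prod>\<eta>\<in>Es (Suc k). ?P' \<eta>)"
    by (rule prod_Es_Suc[symmetric])
  finally have 1: "\<bar>gip d V F\<bar> ^ (2 ^ Suc k) \<le> (\<Prod>\<eta>\<in>Es (Suc k). ?P' \<eta>)" .
  have "0 \<le> (\<Prod>\<eta>\<in>Es k. ?P' (\<eta>(k := False)) * ?P' (\<eta>(k := True)))"
  proof (rule prod_nonneg)
    fix \<eta> assume "\<eta> \<in> Es k"
    have "0 \<le> ?P' (\<eta>(k := b))" for b
      using gip_sig_nonneg[OF k V, of "\<lambda>\<epsilon>. F (mrg k \<eta> \<epsilon>)" b] by (simp add: sig_mrg)
    then show "0 \<le> ?P' (\<eta>(k := False)) * ?P' (\<eta>(k := True))" by simp
  qed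
  then have "0 \<le> (\<Prod>\<eta>\<in>Es (Suc k). ?P' \<eta>)" by (simp only: prod_Es_Suc)
  with 1 show ?case by simp
qed

lemma GCS_raw:
  assumes V: "finite V" and d: "0 < d"
  shows "\<bar>gip d V F\<bar> ^ (2 ^ d) \<le> (\<Prod>\<eta>\<in>Es d. gip d V (\<lambda>_. F \<eta>))"
proof -
  have "gip d V (\<lambda>\<epsilon>. F (mrg d \<eta> \<epsilon>)) = gip d V (\<lambda>_. F \<eta>)" if "\<eta> \<in> Es d" for \<eta>
  proof (rule gip_cong)
    fix \<epsilon> assume "\<epsilon> \<in> Es d"
    with that have "mrg d \<eta> \<epsilon> = \<eta>" by (auto simp: mrg_def Es_def PiE_def extensional_def fun_eq_iff)
    then show "F (mrg d \<eta> \<epsilon>) = F \<eta>" by simp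
  qed
  then have "(\<Prod>\<eta>\<in>Es d. gip d V (\<lambda>\<epsilon>. F (mrg d \<eta> \<epsilon>))) = (\<Prod>\<eta>\<in>Es d. gip d V (\<lambda>_. F \<eta>))"
    by (rule prod.cong[OF refl])
  moreover have "0 \<le> (\<Prod>\<eta>\<in>Es d. gip d V (\<lambda>_. F \<eta>))"
    by (rule prod_nonneg) (rule gip_const_nonneg[OF d V])
  ultimately show ?thesis using GCS_iter[OF V, of d d F] by simp
qed

lemma card_Om: "finite V \<Longrightarrow> card (Om d V) = card V ^ (2 * d)"
proof -
  assume V: "finite V"
  have "card ((UNIV::bool set) \<rightarrow>\<^sub>E V) = card V ^ 2"
    by (simp add: card_PiE)
  then show ?thesis
    by (simp add: Om_def card_PiE power_mult)
qed

lemma card_Es: "card (Es d) = 2 ^ d"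
  by (simp add: Es_def card_PiE)

lemma card_tuples: "finite V \<Longrightarrow> card (tuples d V) = card V ^ d"
  by (simp add: tuples_def card_PiE)

lemma finite_tuples: "finite V \<Longrightarrow> finite (tuples d V)"
  by (simp add: tuples_def finite_PiE)

lemma box_norm_gip:
  "box_norm d V f = root (2 ^ d) (gip d V (\<lambda>_. f) / real (card V) ^ (2 * d))"
  unfolding box_norm_def gip_def Om_def Es_def pt_def by (rule refl)

lemma root_prod:
  assumes "finite A" "0 < n"
  shows "root n (\<Prod>a\<in>A. f a) = (\<Prod>a\<in>A. root n (f a))"
  using assms
proof (induction A rule: finite_induct)
  case empty
  then show ?case by simp
next
  case (insert x F)
  then show ?case by (simp add: real_root_mult)
qed

lemma prod_if_split:
  assumes "finite A" "S \<subseteq> A"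
  shows "(\<Prod>x\<in>A. if x \<in> S then f x else g x) = (\<Prod>x\<in>S. f x) * (\<Prod>x\<in>A - S. g x)"
proof -
  have "A \<inter> {x. x \<in> S} = S" "A \<inter> - {x. x \<in> S} = A - S" using assms(2) by auto
  then show ?thesis using prod.If_cases[OF assms(1), of "\<lambda>x. x \<in> S" f g] by simp
qed

lemma box_norm_nonneg:
  assumes "finite V" "0 < d"
  shows "0 \<le> box_norm d V f"
  unfolding box_norm_gip using gip_const_nonneg[OF assms(2,1)]
  by (intro real_root_ge_zero divide_nonneg_nonneg) auto

lemma box_norm_pow:
  assumes "finite V" "0 < d"
  shows "box_norm d V f ^ (2 ^ d) = gip d V (\<lambda>_. f) / real (card V) ^ (2 * d)"
  unfolding box_norm_gip using gip_const_nonneg[OF assms(2,1)]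
  by (intro real_root_pow_pos2 divide_nonneg_nonneg) auto

lemma GCS:
  assumes V: "finite V" "V \<noteq> {}" and d: "0 < d"
  shows "\<bar>gip d V F / real (card V) ^ (2 * d)\<bar> \<le> (\<Prod>\<eta>\<in>Es d. box_norm d V (F \<eta>))"
proof -
  let ?K = "real (card V) ^ (2 * d)"
  let ?N = "2 ^ d :: nat"
  have K: "0 < ?K" using V by (simp add: card_gt_0_iff)
  have "\<bar>gip d V F / ?K\<bar> ^ ?N = \<bar>gip d V F\<bar> ^ ?N / ?K ^ ?N"
    by (simp add: power_divide)
  also have "\<dots> \<le> (\<Prod>\<eta>\<in>Es d. gip d V (\<lambda>_. F \<eta>)) / ?K ^ ?N"
    by (rule divide_right_mono[OF GCS_raw[OF V(1) d]]) (use K in simp)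
  also have "\<dots> = (\<Prod>\<eta>\<in>Es d. gip d V (\<lambda>_. F \<eta>) / ?K)"
    by (simp add: prod_dividef card_Es)
  finally have 1: "\<bar>gip d V F / ?K\<bar> ^ ?N \<le> (\<Prod>\<eta>\<in>Es d. gip d V (\<lambda>_. F \<eta>) / ?K)" .
  have "\<bar>gip d V F / ?K\<bar> = root ?N (\<bar>gip d V F / ?K\<bar> ^ ?N)"
    by (simp add: real_root_power_cancel)
  also have "\<dots> \<le> root ?N (\<Prod>\<eta>\<in>Es d. gip d V (\<lambda>_. F \<eta>) / ?K)"
    using 1 by (simp add: real_root_le_mono)
  also have "\<dots> = (\<Prod>\<eta>\<in>Es d. box_norm d V (F \<eta>))"
    by (simp add: root_prod[OF finite_Es, of "2^d"] box_norm_gip)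
  finally show ?thesis .
qed

lemma sum_pt:
  fixes V :: "'a set" and h :: "(nat \<Rightarrow> 'a) \<Rightarrow> real"
  assumes V: "finite V" and e: "\<epsilon> \<in> Es d"
  shows "(\<Sum>w\<in>Om d V. h (pt d w \<epsilon>)) = real (card V) ^ d * (\<Sum>v\<in>tuples d V. h v)"
proof -
  define ne where "ne = (\<lambda>i. \<not> \<epsilon> i)"
  define f where "f = (\<lambda>w::nat \<Rightarrow> bool \<Rightarrow> 'a. (pt d w \<epsilon>, pt d w ne))"
  define f' where "f' = (\<lambda>(u::nat \<Rightarrow> 'a, v::nat \<Rightarrow> 'a). (\<lambda>i\<in>{..<d}. \<lambda>b. if b = \<epsilon> i then u i else v i))"
  have bij: "bij_betw f (Om d V) (tuples d V \<times> tuples d V)"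
  proof (rule bij_betw_byWitness[where f' = f'])
    show "\<forall>a\<in>Om d V. f' (f a) = a"
    proof
      fix w assume w: "w \<in> Om d V"
      show "f' (f w) = w"
      proof (rule ext)
        fix i show "f' (f w) i = w i"
        proof (cases "i < d")
          case True
          then show ?thesis by (auto simp: f_def f'_def pt_def ne_def fun_eq_iff)
        next
          case False
          then show ?thesis using w by (auto simp: f_def f'_def Om_def PiE_def extensional_def)
        qed
      qed
    qed
    show "\<forall>a\<in>tuples d V \<times> tuples d V. f (f' a) = a"
    proof
      fix a assume a: "a \<in> tuples d V \<times> tuples d V"
      obtain u v where uv: "a = (u, v)" by (cases a)
      have "pt d (f' (u, v)) \<epsilon> = u"
        using a uv by (auto simp: f'_def pt_def tuples_def PiE_def extensional_def fun_eq_iff)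
      moreover have "pt d (f' (u, v)) ne = v"
        using a uv by (auto simp: f'_def pt_def tuples_def PiE_def extensional_def fun_eq_iff ne_def)
      ultimately show "f (f' a) = a" using uv by (simp add: f_def)
    qed
    show "f ` Om d V \<subseteq> tuples d V \<times> tuples d V"
      by (auto simp: f_def pt_def tuples_def Om_def PiE_def Pi_def)
    show "f' ` (tuples d V \<times> tuples d V) \<subseteq> Om d V"
      by (auto simp: f'_def tuples_def Om_def PiE_def Pi_def)
  qed
  have "(\<Sum>w\<in>Om d V. h (pt d w \<epsilon>)) = (\<Sum>w\<in>Om d V. (\<lambda>p. h (fst p)) (f w))"
    by (simp add: f_def)
  also have "\<dots> = (\<Sum>p\<in>tuples d V \<times> tuples d V. h (fst p))"
    by (rule sum.reindex_bij_betw[OF bij])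
  also have "\<dots> = (\<Sum>u\<in>tuples d V. \<Sum>v\<in>tuples d V. h u)"
    by (simp add: sum.cartesian_product')
  also have "\<dots> = real (card V) ^ d * (\<Sum>v\<in>tuples d V. h v)"
    by (simp add: card_tuples[OF V] sum_distrib_left)
  finally show ?thesis .
qed

lemma gip_const_fun:
  assumes V: "finite V"
  shows "gip d V (\<lambda>_. (\<lambda>x. a * f x)) = a ^ (2 ^ d) * gip d V (\<lambda>_. f)"
proof -
  have "(\<Prod>\<epsilon>\<in>Es d. a * f (pt d w \<epsilon>)) = a ^ (2 ^ d) * (\<Prod>\<epsilon>\<in>Es d. f (pt d w \<epsilon>))" for w
    by (simp add: prod.distrib card_Es)
  then show ?thesis by (simp add: gip_def sum_distrib_left)
qed

lemma box_norm_scale: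
  assumes V: "finite V" "V \<noteq> {}" and d: "0 < d" and a: "0 \<le> a"
  shows "box_norm d V (\<lambda>x. a * f x) = a * box_norm d V f"
proof -
  have "box_norm d V (\<lambda>x. a * f x) = root (2 ^ d) (a ^ (2 ^ d) * (gip d V (\<lambda>_. f) / real (card V) ^ (2 * d)))"
    unfolding box_norm_gip gip_const_fun[OF V(1)] by simp
  also have "\<dots> = a * box_norm d V f"
    unfolding real_root_mult box_norm_gip using a by (simp add: real_root_power_cancel)
  finally show ?thesis .
qed

lemma box_norm_one:
  assumes V: "finite V" "V \<noteq> {}"
  shows "box_norm d V (\<lambda>_. 1) = 1"
proof -
  have "gip d V (\<lambda>_. \<lambda>_. 1) = real (card V) ^ (2 * d)"
    by (simp add: gip_def card_Om[OF V(1)])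
  then show ?thesis using V by (simp add: box_norm_gip card_gt_0_iff)
qed

lemma box_norm_const:
  assumes V: "finite V" "V \<noteq> {}" and d: "0 < d" and a: "0 \<le> a"
  shows "box_norm d V (\<lambda>_. a) = a"
  using box_norm_scale[OF V d a, of "\<lambda>_. 1"] box_norm_one[OF V, of d] by simp

lemma avg_le_box_norm:
  fixes V :: "'a set"
  assumes V: "finite V" "V \<noteq> {}" and d: "0 < d"
  shows "\<bar>avg d V h\<bar> \<le> box_norm d V h"
proof -
  define e0 where "e0 = (\<lambda>i\<in>{..<d}. False)"
  have e0: "e0 \<in> Es d" by (simp add: e0_def Es_def)
  define F where "F = (\<lambda>\<epsilon>. if \<epsilon> = e0 then h else (\<lambda>_::nat \<Rightarrow> 'a. 1::real))"
  have "(\<Prod>\<epsilon>\<in>Es d. F \<epsilon> (pt d w \<epsilon>)) = h (pt d w e0)" for w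
  proof -
    have "(\<Prod>\<epsilon>\<in>Es d. F \<epsilon> (pt d w \<epsilon>)) = (\<Prod>\<epsilon>\<in>Es d. if \<epsilon> = e0 then h (pt d w \<epsilon>) else 1)"
      by (rule prod.cong) (auto simp: F_def)
    also have "\<dots> = h (pt d w e0)" using e0 finite_Es[of d] by simp
    finally show ?thesis .
  qed
  then have "gip d V F = (\<Sum>w\<in>Om d V. h (pt d w e0))" by (simp add: gip_def)
  also have "\<dots> = real (card V) ^ d * (\<Sum>v\<in>tuples d V. h v)" by (rule sum_pt[OF V(1) e0])
  finally have g: "gip d V F / real (card V) ^ (2 * d) = avg d V h"
    using V by (simp add: avg_def power_add mult_2 card_gt_0_iff)
  have "(\<Prod>\<eta>\<in>Es d. box_norm d V (F \<eta>)) = box_norm d V (F e0) * (\<Prod>\<eta>\<in>Es d - {e0}. box_norm d V (F \<eta>))"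
    by (rule prod.remove[OF finite_Es e0])
  also have "(\<Prod>\<eta>\<in>Es d - {e0}. box_norm d V (F \<eta>)) = 1"
    by (rule prod.neutral) (simp add: F_def box_norm_one[OF V])
  finally have "(\<Prod>\<eta>\<in>Es d. box_norm d V (F \<eta>)) = box_norm d V h" by (simp add: F_def)
  then show ?thesis using GCS[OF V d, of F] g by simp
qed

lemma box_norm_triangle:
  fixes V :: "'a set"
  assumes V: "finite V" "V \<noteq> {}" and d: "0 < d"
  shows "box_norm d V (\<lambda>x. u x + v x) \<le> box_norm d V u + box_norm d V v"
proof -
  let ?K = "real (card V) ^ (2 * d)"
  let ?N = "2 ^ d :: nat"
  let ?a = "box_norm d V u" and ?b = "box_norm d V v"
  define FS where "FS = (\<lambda>(S::(nat \<Rightarrow> bool) set) (\<epsilon>::nat \<Rightarrow> bool). if \<epsilon> \<in> S then u else v)"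
  have split: "(\<Prod>\<epsilon>\<in>Es d. u (pt d w \<epsilon>) + v (pt d w \<epsilon>)) = (\<Sum>S\<in>Pow (Es d). \<Prod>\<epsilon>\<in>Es d. FS S \<epsilon> (pt d w \<epsilon>))" for w
  proof -
    have "(\<Prod>\<epsilon>\<in>Es d. u (pt d w \<epsilon>) + v (pt d w \<epsilon>)) =
       (\<Sum>S\<in>Pow (Es d). (\<Prod>\<epsilon>\<in>S. u (pt d w \<epsilon>)) * (\<Prod>\<epsilon>\<in>Es d - S. v (pt d w \<epsilon>)))"
      by (rule prod_add[OF finite_Es])
    also have "\<dots> = (\<Sum>S\<in>Pow (Es d). \<Prod>\<epsilon>\<in>Es d. FS S \<epsilon> (pt d w \<epsilon>))"
    proof (rule sum.cong[OF refl])
      fix S assume "S \<in> Pow (Es d)"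
      then have S: "S \<subseteq> Es d" by simp
      have "(\<Prod>\<epsilon>\<in>Es d. FS S \<epsilon> (pt d w \<epsilon>)) = (\<Prod>\<epsilon>\<in>Es d. if \<epsilon> \<in> S then u (pt d w \<epsilon>) else v (pt d w \<epsilon>))"
        by (rule prod.cong) (auto simp: FS_def)
      also have "\<dots> = (\<Prod>\<epsilon>\<in>S. u (pt d w \<epsilon>)) * (\<Prod>\<epsilon>\<in>Es d - S. v (pt d w \<epsilon>))"
        by (rule prod_if_split[OF finite_Es S])
      finally show "(\<Prod>\<epsilon>\<in>S. u (pt d w \<epsilon>)) * (\<Prod>\<epsilon>\<in>Es d - S. v (pt d w \<epsilon>)) = (\<Prod>\<epsilon>\<in>Es d. FS S \<epsilon> (pt d w \<epsilon>))"
        by simp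
    qed
    finally show ?thesis .
  qed
  have "gip d V (\<lambda>_. (\<lambda>x. u x + v x)) = (\<Sum>w\<in>Om d V. \<Sum>S\<in>Pow (Es d). \<Prod>\<epsilon>\<in>Es d. FS S \<epsilon> (pt d w \<epsilon>))"
    unfolding gip_def using split by simp
  also have "\<dots> = (\<Sum>S\<in>Pow (Es d). gip d V (FS S))"
    unfolding gip_def by (rule sum.swap)
  finally have 1: "gip d V (\<lambda>_. (\<lambda>x. u x + v x)) / ?K = (\<Sum>S\<in>Pow (Es d). gip d V (FS S) / ?K)"
    by (simp add: sum_divide_distrib)
  have "(\<Sum>S\<in>Pow (Es d). gip d V (FS S) / ?K) \<le> (\<Sum>S\<in>Pow (Es d). \<Prod>\<eta>\<in>Es d. box_norm d V (FS S \<eta>))"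
  proof (rule sum_mono)
    fix S show "gip d V (FS S) / ?K \<le> (\<Prod>\<eta>\<in>Es d. box_norm d V (FS S \<eta>))"
      using GCS[OF V d, of "FS S"] by linarith
  qed
  also have "\<dots> = (\<Sum>S\<in>Pow (Es d). (\<Prod>\<eta>\<in>S. ?a) * (\<Prod>\<eta>\<in>Es d - S. ?b))"
  proof (rule sum.cong[OF refl])
    fix S assume "S \<in> Pow (Es d)"
    then have S: "S \<subseteq> Es d" by simp
    have "(\<Prod>\<eta>\<in>Es d. box_norm d V (FS S \<eta>)) = (\<Prod>\<eta>\<in>Es d. if \<eta> \<in> S then ?a else ?b)"
      by (rule prod.cong) (auto simp: FS_def)
    also have "\<dots> = (\<Prod>\<eta>\<in>S. ?a) * (\<Prod>\<eta>\<in>Es d - S. ?b)"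
      by (rule prod_if_split[OF finite_Es S])
    finally show "(\<Prod>\<eta>\<in>Es d. box_norm d V (FS S \<eta>)) = (\<Prod>\<eta>\<in>S. ?a) * (\<Prod>\<eta>\<in>Es d - S. ?b)" .
  qed
  also have "\<dots> = (\<Prod>\<eta>\<in>Es d. ?a + ?b)"
    by (rule prod_add[OF finite_Es, symmetric])
  also have "\<dots> = (?a + ?b) ^ ?N" by (simp add: card_Es)
  finally have 2: "gip d V (\<lambda>_. (\<lambda>x. u x + v x)) / ?K \<le> (?a + ?b) ^ ?N" using 1 by simp
  have "box_norm d V (\<lambda>x. u x + v x) = root ?N (gip d V (\<lambda>_. (\<lambda>x. u x + v x)) / ?K)"
    by (rule box_norm_gip)
  also have "\<dots> \<le> root ?N ((?a + ?b) ^ ?N)"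
    using 2 by (simp add: real_root_le_mono)
  also have "\<dots> = ?a + ?b"
    using box_norm_nonneg[OF V(1) d, of u] box_norm_nonneg[OF V(1) d, of v]
    by (simp add: real_root_power_cancel)
  finally show ?thesis .
qed

lemma gip_le1:
  assumes V: "finite V" "V \<noteq> {}" and f: "\<And>x. \<bar>f x\<bar> \<le> 1"
  shows "gip d V (\<lambda>_. f) / real (card V) ^ (2 * d) \<le> 1"
proof -
  have "gip d V (\<lambda>_. f) \<le> (\<Sum>w\<in>Om d V. 1)"
    unfolding gip_def
  proof (rule sum_mono)
    fix w
    have "(\<Prod>\<epsilon>\<in>Es d. f (pt d w \<epsilon>)) \<le> \<bar>\<Prod>\<epsilon>\<in>Es d. f (pt d w \<epsilon>)\<bar>" by simp
    also have "\<dots> = (\<Prod>\<epsilon>\<in>Es d. \<bar>f (pt d w \<epsilon>)\<bar>)" by (rule abs_prod)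
    also have "\<dots> \<le> 1" by (rule prod_le_1) (use f in auto)
    finally show "(\<Prod>\<epsilon>\<in>Es d. f (pt d w \<epsilon>)) \<le> 1" .
  qed
  also have "\<dots> = real (card V) ^ (2 * d)" by (simp add: card_Om[OF V(1)])
  finally show ?thesis using V by (simp add: card_gt_0_iff)
qed

lemma box_norm_le1:
  assumes V: "finite V" "V \<noteq> {}" and f: "\<And>x. \<bar>f x\<bar> \<le> 1"
  shows "box_norm d V f \<le> 1"
  unfolding box_norm_gip
  using gip_le1[OF V f, of d] real_root_le_mono[of "2^d" _ 1] by simp

definition fdiff :: "nat \<Rightarrow> nat \<Rightarrow> real" where
  "fdiff m k = (\<Sum>j\<le>m. (-1) ^ (m - j) * real (m choose j) * real j ^ k)"

lemma fdiff_step: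
  "fdiff (Suc n) (Suc k) = real (Suc n) * (\<Sum>t\<le>k. real (k choose t) * fdiff n t)"
proof -
  have "fdiff (Suc n) (Suc k) =
      (\<Sum>i\<le>n. (-1) ^ (Suc n - Suc i) * real (Suc n choose Suc i) * real (Suc i) ^ Suc k)"
    unfolding fdiff_def by (subst sum.atMost_Suc_shift) simp
  also have "\<dots> = (\<Sum>i\<le>n. real (Suc n) * ((-1) ^ (n - i) * real (n choose i) * real (Suc i) ^ k))"
  proof (rule sum.cong[OF refl])
    fix i
    have e: "real (Suc n choose Suc i) * real (Suc i) = real (Suc n) * real (n choose i)"
      using Suc_times_binomial_eq[of n i] by (metis of_nat_mult)
    have "(-1) ^ (Suc n - Suc i) * real (Suc n choose Suc i) * real (Suc i) ^ Suc k
        = (-1) ^ (n - i) * (real (Suc n choose Suc i) * real (Suc i)) * real (Suc i) ^ k"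
      by (simp add: algebra_simps)
    also have "\<dots> = real (Suc n) * ((-1) ^ (n - i) * real (n choose i) * real (Suc i) ^ k)"
      by (simp only: e) (simp add: algebra_simps)
    finally show "(-1) ^ (Suc n - Suc i) * real (Suc n choose Suc i) * real (Suc i) ^ Suc k
        = real (Suc n) * ((-1) ^ (n - i) * real (n choose i) * real (Suc i) ^ k)" .
  qed
  also have "\<dots> = real (Suc n) * (\<Sum>i\<le>n. (-1) ^ (n - i) * real (n choose i) * real (Suc i) ^ k)"
    by (simp add: sum_distrib_left)
  also have "(\<Sum>i\<le>n. (-1) ^ (n - i) * real (n choose i) * real (Suc i) ^ k)
      = (\<Sum>i\<le>n. \<Sum>t\<le>k. real (k choose t) * ((-1) ^ (n - i) * real (n choose i) * real i ^ t))"
  proof (rule sum.cong[OF refl])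
    fix i
    have "real (Suc i) ^ k = (\<Sum>t\<le>k. real (k choose t) * real i ^ t * 1 ^ (k - t))"
      using binomial_ring[of "real i" 1 k] by (simp add: add.commute)
    then show "(-1) ^ (n - i) * real (n choose i) * real (Suc i) ^ k
      = (\<Sum>t\<le>k. real (k choose t) * ((-1) ^ (n - i) * real (n choose i) * real i ^ t))"
      by (simp add: sum_distrib_left algebra_simps)
  qed
  also have "\<dots> = (\<Sum>t\<le>k. real (k choose t) * fdiff n t)"
    by (subst sum.swap) (simp add: fdiff_def sum_distrib_left)
  finally show ?thesis .
qed

lemma fdiff_0: "fdiff (Suc n) 0 = 0"
proof -
  have "(1 + (-1::real)) ^ Suc n = (\<Sum>j\<le>Suc n. real (Suc n choose j) * 1 ^ j * (-1) ^ (Suc n - j))"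
    by (rule binomial_ring)
  then have "0 = (\<Sum>j\<le>Suc n. real (Suc n choose j) * (-1) ^ (Suc n - j))" by simp
  then show ?thesis by (simp add: fdiff_def mult.commute)
qed

lemma fdiff_main: "k \<le> m \<Longrightarrow> fdiff m k = (if k = m then fact m else 0)"
proof (induction m arbitrary: k)
  case 0
  then show ?case by (simp add: fdiff_def)
next
  case (Suc n)
  show ?case
  proof (cases k)
    case 0
    then show ?thesis by (simp add: fdiff_0)
  next
    case (Suc k')
    with Suc.prems have k': "k' \<le> n" by simp
    have "fdiff (Suc n) k = real (Suc n) * (\<Sum>t\<le>k'. real (k' choose t) * fdiff n t)"
      using fdiff_step Suc by simp
    also have "(\<Sum>t\<le>k'. real (k' choose t) * fdiff n t) = (\<Sum>t\<le>k'. if t = n then real (k' choose t) * fact n else 0)"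
      by (rule sum.cong[OF refl]) (use k' Suc.IH in auto)
    also have "\<dots> = (if k' = n then fact n else 0)"
      using k' by (simp add: sum.delta)
    finally show ?thesis using Suc by simp
  qed
qed

lemma fd_prod:
  fixes a b :: "'e \<Rightarrow> real"
  assumes E: "finite E" "card E = m"
  shows "(\<Sum>j\<le>m. (-1) ^ (m - j) * real (m choose j) * (\<Prod>e\<in>E. a e + (real j * h) * b e))
       = fact m * h ^ m * (\<Prod>e\<in>E. b e)"
proof -
  have expand: "(\<Prod>e\<in>E. a e + (real j * h) * b e) = (\<Sum>S\<in>Pow E. (real j * h) ^ card S * ((\<Prod>e\<in>S. b e) * (\<Prod>e\<in>E - S. a e)))" for j
  proof -
    have "(\<Prod>e\<in>E. a e + (real j * h) * b e) = (\<Prod>e\<in>E. (real j * h) * b e + a e)"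
      by (simp add: add.commute)
    also have "\<dots> = (\<Sum>S\<in>Pow E. (\<Prod>e\<in>S. (real j * h) * b e) * (\<Prod>e\<in>E - S. a e))"
      by (rule prod_add[OF E(1)])
    also have "\<dots> = (\<Sum>S\<in>Pow E. (real j * h) ^ card S * ((\<Prod>e\<in>S. b e) * (\<Prod>e\<in>E - S. a e)))"
      by (simp add: prod.distrib mult.assoc power_mult_distrib)
    finally show ?thesis .
  qed
  have "(\<Sum>j\<le>m. (-1) ^ (m - j) * real (m choose j) * (\<Prod>e\<in>E. a e + (real j * h) * b e))
      = (\<Sum>j\<le>m. \<Sum>S\<in>Pow E. h ^ card S * ((\<Prod>e\<in>S. b e) * (\<Prod>e\<in>E - S. a e)) * ((-1) ^ (m - j) * real (m choose j) * real j ^ card S))"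
  proof (rule sum.cong[OF refl])
    fix j
    show "(-1) ^ (m - j) * real (m choose j) * (\<Prod>e\<in>E. a e + (real j * h) * b e)
      = (\<Sum>S\<in>Pow E. h ^ card S * ((\<Prod>e\<in>S. b e) * (\<Prod>e\<in>E - S. a e)) * ((-1) ^ (m - j) * real (m choose j) * real j ^ card S))"
      unfolding expand sum_distrib_left
      by (rule sum.cong[OF refl]) (simp only: power_mult_distrib mult_ac)
  qed
  also have "\<dots> = (\<Sum>S\<in>Pow E. h ^ card S * ((\<Prod>e\<in>S. b e) * (\<Prod>e\<in>E - S. a e)) * fdiff m (card S))"
    by (subst sum.swap) (simp add: fdiff_def sum_distrib_left)
  also have "\<dots> = (\<Sum>S\<in>Pow E. if S = E then h ^ m * (\<Prod>e\<in>E. b e) * fact m else 0)"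
  proof (rule sum.cong[OF refl])
    fix S assume "S \<in> Pow E"
    then have S: "S \<subseteq> E" by simp
    then have c: "card S \<le> m" using E card_mono by blast
    have "card S = m \<longleftrightarrow> S = E"
    proof
      assume "card S = m" then show "S = E" using card_subset_eq[OF E(1) S] E(2) by simp
    qed (use E in simp)
    then show "h ^ card S * ((\<Prod>e\<in>S. b e) * (\<Prod>e\<in>E - S. a e)) * fdiff m (card S)
        = (if S = E then h ^ m * (\<Prod>e\<in>E. b e) * fact m else 0)"
      by (cases "S = E") (simp_all add: fdiff_main[OF c] fdiff_main[of m m] E(2))
  qed
  also have "\<dots> = fact m * h ^ m * (\<Prod>e\<in>E. b e)"
    using E by (simp add: sum.delta')
  finally show ?thesis .
qed



lemma pow_fact_le_exp:
  fixes x :: real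
  assumes "0 \<le> x"
  shows "x ^ n / fact n \<le> exp x"
proof -
  have s: "(\<lambda>n. x ^ n / fact n) sums exp x"
    using exp_converges[of x] by (simp add: divide_inverse mult.commute)
  have "(\<Sum>k\<in>{n}. x ^ k / fact k) \<le> (\<Sum>k. x ^ k / fact k)"
    by (rule sum_le_suminf[OF sums_summable[OF s]]) (use assms in auto)
  then show ?thesis using sums_unique[OF s] by simp
qed

lemma avg_affine:
  fixes V :: "'a set"
  assumes V: "finite V" "V \<noteq> {}"
  shows "avg d V (\<lambda>x. c + t * (f x - c)) = c + t * (avg d V f - c)"
proof -
  have K: "real (card V) ^ d > 0" using V by (simp add: card_gt_0_iff)
  have "(\<Sum>v\<in>tuples d V. c + t * (f v - c)) = real (card V) ^ d * c + t * ((\<Sum>v\<in>tuples d V. f v) - real (card V) ^ d * c)"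
    by (simp add: sum.distrib sum_distrib_left sum_subtractf card_tuples[OF V(1)] algebra_simps)
  then show ?thesis using K by (simp add: avg_def field_simps)
qed

lemma avg_nonneg:
  assumes "\<And>x. 0 \<le> f x"
  shows "0 \<le> avg d V f"
  unfolding avg_def using assms by (intro divide_nonneg_nonneg sum_nonneg) auto

lemma pow_over_fact_le: "real n ^ n / fact n \<le> 6 ^ n / 2 ^ n"
proof -
  have "real n ^ n / fact n \<le> exp (real n)" by (rule pow_fact_le_exp) simp
  also have "exp (real n) = exp 1 ^ n" using exp_of_nat_mult[of n 1] by simp
  also have "\<dots> \<le> 3 ^ n" by (rule power_mono[OF exp_le]) simp
  also have "(3::real) ^ n = 6 ^ n / 2 ^ n" by (simp add: power_divide[symmetric])
  finally show ?thesis .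
qed

lemma gap_bound:
  fixes V :: "'a set" and f :: "(nat \<Rightarrow> 'a) \<Rightarrow> real"
  assumes V: "finite V" "V \<noteq> {}" and d: "0 < d"
    and f0: "\<And>x. 0 \<le> f x" and f1: "\<And>x. f x \<le> 1"
    and gap: "box_norm d V f ^ (2 ^ d) \<le> avg d V f ^ (2 ^ d) + \<theta>"
  shows "box_norm d V (\<lambda>x. f x - avg d V f) ^ (2 ^ d) \<le> 6 ^ (2 ^ d) * \<theta>"
proof -
  define N where "N = (2::nat) ^ d"
  define \<delta> where "\<delta> = avg d V f"
  define a where "a = box_norm d V f"
  define K where "K = real (card V) ^ (2 * d)"
  define h where "h = 1 / real N"
  define g where "g = (\<lambda>x. f x - \<delta>)"
  define \<phi> where "\<phi> = (\<lambda>t. gip d V (\<lambda>_. (\<lambda>x. \<delta> + t * g x)) / K)"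
  have N0: "0 < N" by (simp add: N_def)
  have K0: "0 < K" using V by (simp add: K_def card_gt_0_iff)
  have \<delta>0: "0 \<le> \<delta>" unfolding \<delta>_def by (rule avg_nonneg) (rule f0)
  have \<delta>a: "\<delta> \<le> a" using avg_le_box_norm[OF V d, of f] by (simp add: \<delta>_def a_def)
  have gap': "a ^ N \<le> \<delta> ^ N + \<theta>" using gap by (simp add: a_def \<delta>_def N_def)
  have bnds: "\<bar>\<phi> t - \<delta> ^ N\<bar> \<le> \<theta>" if t0: "0 \<le> t" and t1: "t \<le> 1" for t
  proof -
    define u where "u = (\<lambda>x. \<delta> + t * g x)"
    have phi: "\<phi> t = box_norm d V u ^ N"
      unfolding \<phi>_def u_def N_def K_def using box_norm_pow[OF V(1) d] by simp
    have "avg d V u = \<delta>" unfolding u_def g_def using avg_affine[OF V, of d \<delta> t f]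
      by (simp add: \<delta>_def)
    then have lo: "\<delta> \<le> box_norm d V u" using avg_le_box_norm[OF V d, of u] by simp
    have "u = (\<lambda>x. (\<lambda>_. (1 - t) * \<delta>) x + (\<lambda>x. t * f x) x)"
      by (rule ext) (simp add: u_def g_def algebra_simps)
    then have "box_norm d V u \<le> box_norm d V (\<lambda>_. (1 - t) * \<delta>) + box_norm d V (\<lambda>x. t * f x)"
      using box_norm_triangle[OF V d, of "\<lambda>_. (1 - t) * \<delta>" "\<lambda>x. t * f x"] by simp
    also have "\<dots> = (1 - t) * \<delta> + t * a"
      using box_norm_const[OF V d, of "(1 - t) * \<delta>"] box_norm_scale[OF V d t0, of f] t1 \<delta>0
      by (simp add: a_def)
    also have "\<dots> \<le> a"
    proof -
      have "(1 - t) * \<delta> \<le> (1 - t) * a" by (rule mult_left_mono) (use \<delta>a t1 in auto)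
      moreover have "(1 - t) * a + t * a = a" by (simp add: algebra_simps)
      ultimately show ?thesis by linarith
    qed
    finally have hi: "box_norm d V u \<le> a" .
    have "\<delta> ^ N \<le> box_norm d V u ^ N" by (rule power_mono[OF lo \<delta>0])
    moreover have "box_norm d V u ^ N \<le> a ^ N"
      by (rule power_mono[OF hi]) (use \<delta>0 lo in linarith)
    ultimately show ?thesis using gap' phi by linarith
  qed
  have ident: "(\<Sum>j\<le>N. (-1) ^ (N - j) * real (N choose j) * \<phi> (real j * h))
      = fact N * h ^ N * (gip d V (\<lambda>_. g) / K)"
  proof -
    have "(\<Sum>j\<le>N. (-1) ^ (N - j) * real (N choose j) * \<phi> (real j * h))
       = (\<Sum>j\<le>N. (\<Sum>w\<in>Om d V. (-1) ^ (N - j) * real (N choose j) *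
            (\<Prod>\<epsilon>\<in>Es d. \<delta> + (real j * h) * g (pt d w \<epsilon>))) / K)"
      by (rule sum.cong[OF refl]) (simp only: \<phi>_def gip_def sum_distrib_left times_divide_eq_right)
    also have "\<dots> = (\<Sum>j\<le>N. \<Sum>w\<in>Om d V. (-1) ^ (N - j) * real (N choose j) *
            (\<Prod>\<epsilon>\<in>Es d. \<delta> + (real j * h) * g (pt d w \<epsilon>))) / K"
      by (simp only: sum_divide_distrib)
    also have "\<dots> = (\<Sum>w\<in>Om d V. \<Sum>j\<le>N. (-1) ^ (N - j) * real (N choose j) *
            (\<Prod>\<epsilon>\<in>Es d. \<delta> + (real j * h) * g (pt d w \<epsilon>))) / K"
      by (subst sum.swap) (rule refl)
    also have "\<dots> = (\<Sum>w\<in>Om d V. fact N * h ^ N * (\<Prod>\<epsilon>\<in>Es d. g (pt d w \<epsilon>))) / K"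
    proof -
      have cE: "card (Es d) = N" by (simp add: card_Es N_def)
      have "(\<Sum>w\<in>Om d V. \<Sum>j\<le>N. (-1) ^ (N - j) * real (N choose j) *
            (\<Prod>\<epsilon>\<in>Es d. \<delta> + (real j * h) * g (pt d w \<epsilon>)))
         = (\<Sum>w\<in>Om d V. fact N * h ^ N * (\<Prod>\<epsilon>\<in>Es d. g (pt d w \<epsilon>)))"
        by (rule sum.cong[OF refl]) (rule fd_prod[OF finite_Es cE])
      then show ?thesis by (rule arg_cong[where f = "\<lambda>x. x / K"])
    qed
    also have "\<dots> = fact N * h ^ N * (gip d V (\<lambda>_. g) / K)"
      by (simp add: gip_def sum_distrib_left)
    finally show ?thesis .
  qed
  have zero: "(\<Sum>j\<le>N. (-1) ^ (N - j) * real (N choose j) * \<delta> ^ N) = 0"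
  proof -
    obtain n where n: "N = Suc n" using N0 by (cases N) auto
    have "(\<Sum>j\<le>N. (-1) ^ (N - j) * real (N choose j) * \<delta> ^ N) = fdiff N 0 * \<delta> ^ N"
      by (simp add: fdiff_def sum_distrib_right)
    then show ?thesis using fdiff_0[of n] n by simp
  qed
  have "fact N * h ^ N * (gip d V (\<lambda>_. g) / K)
      = (\<Sum>j\<le>N. (-1) ^ (N - j) * real (N choose j) * (\<phi> (real j * h) - \<delta> ^ N))"
    using ident zero by (simp add: right_diff_distrib sum_subtractf)
  also have "\<dots> \<le> (\<Sum>j\<le>N. real (N choose j) * \<theta>)"
  proof (rule sum_mono)
    fix j assume j: "j \<in> {..N}"
    have t0: "0 \<le> real j * h" by (simp add: h_def)
    have t1: "real j * h \<le> 1" using j N0 by (simp add: h_def)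
    have "(-1) ^ (N - j) * real (N choose j) * (\<phi> (real j * h) - \<delta> ^ N)
        \<le> \<bar>(-1) ^ (N - j) * real (N choose j) * (\<phi> (real j * h) - \<delta> ^ N)\<bar>" by simp
    also have "\<dots> = real (N choose j) * \<bar>\<phi> (real j * h) - \<delta> ^ N\<bar>"
      by (simp add: abs_mult)
    also have "\<dots> \<le> real (N choose j) * \<theta>"
      by (rule mult_left_mono[OF bnds[OF t0 t1]]) simp
    finally show "(-1) ^ (N - j) * real (N choose j) * (\<phi> (real j * h) - \<delta> ^ N) \<le> real (N choose j) * \<theta>" .
  qed
  also have "\<dots> = 2 ^ N * \<theta>"
  proof -
    have "real (\<Sum>j\<le>N. N choose j) = 2 ^ N" by (simp add: choose_row_sum)
    then have "(\<Sum>j\<le>N. real (N choose j)) = 2 ^ N" by (simp only: of_nat_sum)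
    then show ?thesis by (simp only: sum_distrib_right[symmetric])
  qed
  finally have 1: "fact N * h ^ N * (gip d V (\<lambda>_. g) / K) \<le> 2 ^ N * \<theta>" .
  have Bg: "gip d V (\<lambda>_. g) / K = box_norm d V g ^ N"
    using box_norm_pow[OF V(1) d, of g] by (simp add: K_def N_def)
  have fh: "fact N * h ^ N = fact N / real N ^ N" by (simp add: h_def power_divide)
  have pos: "0 < fact N / real N ^ N" using N0 by simp
  have "box_norm d V g ^ N \<le> 2 ^ N * \<theta> / (fact N / real N ^ N)"
  proof -
    have "box_norm d V g ^ N * (fact N / real N ^ N) \<le> 2 ^ N * \<theta>"
      using 1 unfolding Bg fh by (simp only: mult.commute)
    then show ?thesis by (simp only: pos_le_divide_eq[OF pos])
  qed
  also have "\<dots> = 2 ^ N * \<theta> * (real N ^ N / fact N)" by simp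
  also have "\<dots> \<le> 2 ^ N * \<theta> * (6 ^ N / 2 ^ N)"
  proof (cases "0 \<le> \<theta>")
    case True
    then show ?thesis by (intro mult_left_mono pow_over_fact_le) simp
  next
    case False
    have "\<phi> 0 = \<delta> ^ N"
      unfolding \<phi>_def using box_norm_pow[OF V(1) d, of "\<lambda>_. \<delta>"] box_norm_const[OF V d \<delta>0]
      by (simp add: K_def N_def)
    then show ?thesis using bnds[of 0] False by simp
  qed
  also have "\<dots> = 6 ^ N * \<theta>" by simp
  finally show ?thesis by (simp add: g_def \<delta>_def N_def)
qed



definition lo :: "(nat \<Rightarrow> nat set) \<Rightarrow> nat \<Rightarrow> nat" where "lo H i = Min (H i)"
definition hi :: "(nat \<Rightarrow> nat set) \<Rightarrow> nat \<Rightarrow> nat" where "hi H i = Max (H i)"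
definition cc :: "(nat \<Rightarrow> nat set) \<Rightarrow> nat \<Rightarrow> bool \<Rightarrow> nat" where
  "cc H i b = (if b then hi H i else lo H i)"
definition sset :: "(nat \<Rightarrow> nat set) \<Rightarrow> nat \<Rightarrow> (nat \<Rightarrow> bool) \<Rightarrow> nat set" where
  "sset H d \<epsilon> = (\<lambda>j. cc H j (\<epsilon> j)) ` {..<d}"
definition Phi :: "(nat \<Rightarrow> nat set) \<Rightarrow> nat \<Rightarrow> (nat \<Rightarrow> 'a) \<Rightarrow> nat \<Rightarrow> bool \<Rightarrow> 'a" where
  "Phi H d \<xi> = (\<lambda>i\<in>{..<d}. \<lambda>b. \<xi> (cc H i b))"

lemma bf_H:
  assumes bf: "box_family d n H" and i: "i < d"
  shows "lo H i < hi H i" "H i = {lo H i, hi H i}" "lo H i \<in> {1..n}" "hi H i \<in> {1..n}"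
proof -
  have c: "card (H i) = 2" and sub: "H i \<subseteq> {1..n}" using bf i by (auto simp: box_family_def)
  obtain x y where xy: "H i = {x, y}" "x \<noteq> y" using c card_2_iff by metis
  have "lo H i = min x y" "hi H i = max x y" by (simp_all add: lo_def hi_def xy)
  then show "lo H i < hi H i" "H i = {lo H i, hi H i}" using xy by (auto simp: min_def max_def)
  then show "lo H i \<in> {1..n}" "hi H i \<in> {1..n}" using sub by auto
qed

lemma bf_order:
  assumes bf: "box_family d n H"
  shows "i < j \<Longrightarrow> j < d \<Longrightarrow> hi H i < lo H j"
proof (induction j)
  case 0
  then show ?case by simp
next
  case (Suc j)
  have step: "hi H j < lo H (Suc j)" using bf Suc.prems by (auto simp: box_family_def hi_def lo_def)
  show ?case
  proof (cases "i = j")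
    case True
    then show ?thesis using step by simp
  next
    case False
    then have "i < j" using Suc.prems by simp
    then have "hi H i < lo H j" using Suc by simp
    moreover have "lo H j < hi H j" using bf_H(1)[OF bf] Suc.prems by simp
    ultimately show ?thesis using step by simp
  qed
qed

lemma cc_less:
  assumes bf: "box_family d n H" and "i < j" "j < d"
  shows "cc H i b < cc H j b'"
proof -
  have "cc H i b \<le> hi H i" using bf_H(1)[OF bf, of i] assms by (auto simp: cc_def)
  moreover have "lo H j \<le> cc H j b'" using bf_H(1)[OF bf, of j] assms by (auto simp: cc_def)
  ultimately show ?thesis using bf_order[OF bf assms(2,3)] by simp
qed

lemma cc_inj:
  assumes bf: "box_family d n H" and i: "i < d" and j: "j < d" and eq: "cc H i b = cc H j b'"
  shows "i = j \<and> b = b'"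
proof -
  have "i = j"
  proof (rule ccontr)
    assume "i \<noteq> j"
    then have "i < j \<or> j < i" by arith
    then show False using cc_less[OF bf, of i j b b'] cc_less[OF bf, of j i b' b] i j eq by auto
  qed
  moreover have "b = b'" using eq \<open>i = j\<close> bf_H(1)[OF bf i] by (auto simp: cc_def split: if_splits)
  ultimately show ?thesis by simp
qed

lemma cc_in_H:
  assumes bf: "box_family d n H" and i: "i < d" and j: "j < d"
  shows "cc H j b \<in> H i \<longleftrightarrow> i = j"
proof
  assume "cc H j b \<in> H i"
  then have "cc H j b = cc H i False \<or> cc H j b = cc H i True"
    using bf_H(2)[OF bf i] by (auto simp: cc_def)
  then show "i = j" using cc_inj[OF bf j i] by blast
next
  assume "i = j"
  then show "cc H j b \<in> H i" using bf_H(2)[OF bf i] by (auto simp: cc_def)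
qed

lemma cc_range:
  assumes bf: "box_family d n H" and i: "i < d"
  shows "cc H i b \<in> {1..n}"
  using bf_H(3,4)[OF bf i] by (auto simp: cc_def)

lemma inj_cc_eps:
  assumes bf: "box_family d n H"
  shows "inj_on (\<lambda>j. cc H j (\<epsilon> j)) {..<d}"
  using cc_inj[OF bf] by (auto simp: inj_on_def)

lemma card_sset:
  assumes bf: "box_family d n H"
  shows "card (sset H d \<epsilon>) = d"
  unfolding sset_def using card_image[OF inj_cc_eps[OF bf, of \<epsilon>]] by simp

lemma sorted_sset:
  assumes bf: "box_family d n H"
  shows "sorted_list_of_set (sset H d \<epsilon>) = map (\<lambda>j. cc H j (\<epsilon> j)) [0..<d]"
proof -
  have fin: "finite (sset H d \<epsilon>)" by (simp add: sset_def)
  have "sorted_wrt (<) (map (\<lambda>j. cc H j (\<epsilon> j)) [0..<d])"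
    unfolding sorted_wrt_iff_nth_less using cc_less[OF bf] by auto
  moreover have "set (map (\<lambda>j. cc H j (\<epsilon> j)) [0..<d]) = sset H d \<epsilon>"
    by (auto simp: sset_def)
  moreover have "length (map (\<lambda>j. cc H j (\<epsilon> j)) [0..<d]) = card (sset H d \<epsilon>)"
    by (simp add: card_sset[OF bf])
  ultimately show ?thesis using sorted_list_of_set_unique[OF fin] by blast
qed

lemma sset_inter:
  assumes bf: "box_family d n H" and i: "i < d"
  shows "sset H d \<epsilon> \<inter> H i = {cc H i (\<epsilon> i)}"
  using cc_in_H[OF bf i] i by (auto simp: sset_def)

lemma box_eq:
  assumes bf: "box_family d n H"
  shows "box d n H = sset H d ` Es d"
proof
  show "sset H d ` Es d \<subseteq> box d n H"
  proof
    fix s assume "s \<in> sset H d ` Es d"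
    then obtain \<epsilon> where s: "s = sset H d \<epsilon>" by auto
    have "s \<subseteq> {1..n}" using cc_range[OF bf] by (auto simp: s sset_def)
    moreover have "card s = d" by (simp add: s card_sset[OF bf])
    moreover have "\<forall>i<d. card (s \<inter> H i) = 1" by (simp add: s sset_inter[OF bf])
    ultimately show "s \<in> box d n H" by (simp add: box_def)
  qed
  show "box d n H \<subseteq> sset H d ` Es d"
  proof
    fix s assume s: "s \<in> box d n H"
    then have sn: "s \<subseteq> {1..n}" and cs: "card s = d" and ci: "\<And>i. i < d \<Longrightarrow> card (s \<inter> H i) = 1"
      by (auto simp: box_def)
    define \<epsilon> where "\<epsilon> = (\<lambda>i\<in>{..<d}. hi H i \<in> s)"
    have e: "\<epsilon> \<in> Es d" by (simp add: \<epsilon>_def Es_def)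
    have mem: "cc H i (\<epsilon> i) \<in> s" if i: "i < d" for i
    proof -
      obtain x where x: "s \<inter> H i = {x}" using ci[OF i] card_1_singleton_iff[of "s \<inter> H i"] by auto
      have "x = lo H i \<or> x = hi H i" using x bf_H(2)[OF bf i] by auto
      then show ?thesis using x i by (auto simp: \<epsilon>_def cc_def)
    qed
    have sub: "sset H d \<epsilon> \<subseteq> s" using mem by (auto simp: sset_def)
    have fs: "finite s" using sn finite_subset by blast
    have "sset H d \<epsilon> = s"
      using card_subset_eq[OF fs sub] card_sset[OF bf, of \<epsilon>] cs by simp
    then show "s \<in> sset H d ` Es d" using e by blast
  qed
qed

lemma inj_sset:
  assumes bf: "box_family d n H"
  shows "inj_on (sset H d) (Es d)"
proof (rule inj_onI)
  fix \<epsilon> \<epsilon>' assume e: "\<epsilon> \<in> Es d" and e': "\<epsilon>' \<in> Es d" and eq: "sset H d \<epsilon> = sset H d \<epsilon>'"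
  show "\<epsilon> = \<epsilon>'"
  proof (rule ext)
    fix i show "\<epsilon> i = \<epsilon>' i"
    proof (cases "i < d")
      case True
      have "{cc H i (\<epsilon> i)} = {cc H i (\<epsilon>' i)}"
        using sset_inter[OF bf True, of \<epsilon>] sset_inter[OF bf True, of \<epsilon>'] eq by simp
      then show ?thesis using cc_inj[OF bf True True] by blast
    next
      case False
      then show ?thesis using e e' by (auto simp: Es_def PiE_def extensional_def)
    qed
  qed
qed

lemma Xarr_sset:
  assumes bf: "box_family d n H"
  shows "Xarr d V G \<xi> (sset H d \<epsilon>) = indicator (curlyG d V G) (pt d (Phi H d \<xi>) \<epsilon>)"
proof -
  have "(\<lambda>j\<in>{..<d}. \<xi> (sorted_list_of_set (sset H d \<epsilon>) ! j)) = pt d (Phi H d \<xi>) \<epsilon>"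
    unfolding sorted_sset[OF bf] pt_def Phi_def by (rule restrict_ext) simp
  then show ?thesis by (simp add: Xarr_def)
qed

definition CC :: "(nat \<Rightarrow> nat set) \<Rightarrow> nat \<Rightarrow> nat set" where
  "CC H d = (\<lambda>(i, b). cc H i b) ` ({..<d} \<times> (UNIV :: bool set))"

lemma inj_cc2:
  assumes bf: "box_family d n H"
  shows "inj_on (\<lambda>(i, b). cc H i b) ({..<d} \<times> (UNIV :: bool set))"
  using cc_inj[OF bf] by (auto simp: inj_on_def)

lemma CC_sub: "box_family d n H \<Longrightarrow> CC H d \<subseteq> {1..n}"
  using cc_range by (auto simp: CC_def)

lemma card_CC: "box_family d n H \<Longrightarrow> card (CC H d) = 2 * d"
  unfolding CC_def by (simp add: card_image[OF inj_cc2] card_cartesian_product)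

lemma count_Phi:
  fixes V :: "'a set" and P :: "(nat \<Rightarrow> bool \<Rightarrow> 'a) \<Rightarrow> bool"
  assumes bf: "box_family d n H" and V: "finite V"
  shows "card {\<xi> \<in> {1..n} \<rightarrow>\<^sub>E V. P (Phi H d \<xi>)} = card {w \<in> Om d V. P w} * card V ^ (n - 2 * d)"
proof -
  let ?I = "{1..n::nat}"
  let ?C = "CC H d"
  let ?A = "{..<d} \<times> (UNIV :: bool set)"
  let ?g = "\<lambda>(i, b). cc H i b"
  let ?ti = "the_inv_into ?A ?g"
  define F where "F = (\<lambda>\<xi>::nat \<Rightarrow> 'a. (Phi H d \<xi>, restrict \<xi> (?I - ?C)))"
  define F' where "F' = (\<lambda>(w::nat \<Rightarrow> bool \<Rightarrow> 'a, \<eta>::nat \<Rightarrow> 'a). (\<lambda>k. if k \<in> ?C then (case ?ti k of (i, b) \<Rightarrow> w i b) else \<eta> k))"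
  have inj: "inj_on ?g ?A" by (rule inj_cc2[OF bf])
  have ti: "?ti (cc H i b) = (i, b)" if "i < d" for i b
    using the_inv_into_f_f[OF inj, of "(i, b)"] that by simp
  have Csub: "?C \<subseteq> ?I" by (rule CC_sub[OF bf])
  have bij: "bij_betw F {\<xi> \<in> ?I \<rightarrow>\<^sub>E V. P (Phi H d \<xi>)} ({w \<in> Om d V. P w} \<times> ((?I - ?C) \<rightarrow>\<^sub>E V))"
  proof (rule bij_betw_byWitness[where f' = F'])
    show "\<forall>\<xi>\<in>{\<xi> \<in> ?I \<rightarrow>\<^sub>E V. P (Phi H d \<xi>)}. F' (F \<xi>) = \<xi>"
    proof
      fix \<xi> assume x: "\<xi> \<in> {\<xi> \<in> ?I \<rightarrow>\<^sub>E V. P (Phi H d \<xi>)}"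
      show "F' (F \<xi>) = \<xi>"
      proof (rule ext)
        fix k
        show "F' (F \<xi>) k = \<xi> k"
        proof (cases "k \<in> ?C")
          case True
          then obtain i b where ib: "i < d" "k = cc H i b" by (auto simp: CC_def)
          have kC: "cc H i b \<in> CC H d" using ib True by simp
          show ?thesis using ib by (simp add: F_def F'_def ti Phi_def kC)
        next
          case False
          then show ?thesis using x by (auto simp: F_def F'_def PiE_def extensional_def)
        qed
      qed
    qed
    show "\<forall>p\<in>{w \<in> Om d V. P w} \<times> ((?I - ?C) \<rightarrow>\<^sub>E V). F (F' p) = p"
    proof
      fix p assume p: "p \<in> {w \<in> Om d V. P w} \<times> ((?I - ?C) \<rightarrow>\<^sub>E V)"
      obtain w \<eta> where p': "p = (w, \<eta>)" by (cases p)
      have w: "w \<in> Om d V" and \<eta>: "\<eta> \<in> (?I - ?C) \<rightarrow>\<^sub>E V" using p p' by auto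
      have "Phi H d (F' (w, \<eta>)) = w"
      proof (rule ext)
        fix i show "Phi H d (F' (w, \<eta>)) i = w i"
        proof (cases "i < d")
          case True
          have "cc H i b \<in> ?C" for b using True by (auto simp: CC_def)
          then show ?thesis using True by (simp add: Phi_def F'_def ti fun_eq_iff)
        next
          case False
          then show ?thesis using w by (simp add: Phi_def Om_def PiE_def extensional_def)
        qed
      qed
      moreover have "restrict (F' (w, \<eta>)) (?I - ?C) = \<eta>"
      proof (rule ext)
        fix k show "restrict (F' (w, \<eta>)) (?I - ?C) k = \<eta> k"
          using \<eta> by (auto simp: F'_def PiE_def extensional_def)
      qed
      ultimately show "F (F' p) = p" by (simp add: F_def p')
    qed
    show "F ` {\<xi> \<in> ?I \<rightarrow>\<^sub>E V. P (Phi H d \<xi>)} \<subseteq> {w \<in> Om d V. P w} \<times> ((?I - ?C) \<rightarrow>\<^sub>E V)"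
    proof
      fix q assume "q \<in> F ` {\<xi> \<in> ?I \<rightarrow>\<^sub>E V. P (Phi H d \<xi>)}"
      then obtain \<xi> where x: "\<xi> \<in> ?I \<rightarrow>\<^sub>E V" "P (Phi H d \<xi>)" and q: "q = F \<xi>" by auto
      have "Phi H d \<xi> \<in> Om d V"
        using x(1) cc_range[OF bf] by (auto simp: Phi_def Om_def PiE_def Pi_def)
      then show "q \<in> {w \<in> Om d V. P w} \<times> ((?I - ?C) \<rightarrow>\<^sub>E V)"
        using x q by (auto simp: F_def)
    qed
    show "F' ` ({w \<in> Om d V. P w} \<times> ((?I - ?C) \<rightarrow>\<^sub>E V)) \<subseteq> {\<xi> \<in> ?I \<rightarrow>\<^sub>E V. P (Phi H d \<xi>)}"
    proof
      fix \<xi> assume "\<xi> \<in> F' ` ({w \<in> Om d V. P w} \<times> ((?I - ?C) \<rightarrow>\<^sub>E V))"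
      then obtain w \<eta> where w: "w \<in> Om d V" "P w" and \<eta>: "\<eta> \<in> (?I - ?C) \<rightarrow>\<^sub>E V" and xi: "\<xi> = F' (w, \<eta>)"
        by auto
      have "\<xi> \<in> ?I \<rightarrow>\<^sub>E V"
      proof (rule PiE_I)
        fix k assume k: "k \<in> ?I"
        show "\<xi> k \<in> V"
        proof (cases "k \<in> ?C")
          case True
          then obtain i b where ib: "i < d" "k = cc H i b" by (auto simp: CC_def)
          then show ?thesis using w(1) True by (auto simp: xi F'_def ti Om_def PiE_def Pi_def)
        next
          case False
          then show ?thesis using k \<eta> by (auto simp: xi F'_def)
        qed
      next
        fix k assume k: "k \<notin> ?I"
        then have "k \<notin> ?C" using Csub by auto
        then show "\<xi> k = undefined" using k \<eta> by (auto simp: xi F'_def PiE_def extensional_def)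
      qed
      moreover have "Phi H d \<xi> = w"
      proof (rule ext)
        fix i show "Phi H d \<xi> i = w i"
        proof (cases "i < d")
          case True
          have "cc H i b \<in> ?C" for b using True by (auto simp: CC_def)
          then show ?thesis using True by (simp add: xi Phi_def F'_def ti fun_eq_iff)
        next
          case False
          then show ?thesis using w by (simp add: Phi_def Om_def PiE_def extensional_def)
        qed
      qed
      ultimately show "\<xi> \<in> {\<xi> \<in> ?I \<rightarrow>\<^sub>E V. P (Phi H d \<xi>)}" using w by simp
    qed
  qed
  have "card {\<xi> \<in> ?I \<rightarrow>\<^sub>E V. P (Phi H d \<xi>)} = card ({w \<in> Om d V. P w} \<times> ((?I - ?C) \<rightarrow>\<^sub>E V))"
    by (rule bij_betw_same_card[OF bij])
  also have "\<dots> = card {w \<in> Om d V. P w} * card ((?I - ?C) \<rightarrow>\<^sub>E V)"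
    by (rule card_cartesian_product)
  also have "card ((?I - ?C) \<rightarrow>\<^sub>E V) = card V ^ (n - 2 * d)"
  proof -
    have "card (?I - ?C) = n - 2 * d" using card_Diff_subset[OF _ Csub] card_CC[OF bf]
      by (simp add: finite_subset[OF Csub])
    then show ?thesis by (simp add: card_PiE)
  qed
  finally show ?thesis .
qed

lemma prob_Phi:
  fixes V :: "'a set" and P :: "(nat \<Rightarrow> bool \<Rightarrow> 'a) \<Rightarrow> bool"
  assumes bf: "box_family d n H" and V: "finite V" "V \<noteq> {}" and n: "2 * d \<le> n"
  shows "prob_xi n V (\<lambda>\<xi>. P (Phi H d \<xi>)) = real (card {w \<in> Om d V. P w}) / real (card V) ^ (2 * d)"
proof -
  let ?S = "{1..n} \<rightarrow>\<^sub>E V"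
  have ne: "?S \<noteq> {}" using V by (simp add: PiE_eq_empty_iff)
  have fin: "finite ?S" using V by (simp add: finite_PiE)
  have "?S \<inter> {\<xi>. P (Phi H d \<xi>)} = {\<xi> \<in> ?S. P (Phi H d \<xi>)}" by auto
  then have "prob_xi n V (\<lambda>\<xi>. P (Phi H d \<xi>)) = real (card {\<xi> \<in> ?S. P (Phi H d \<xi>)}) / real (card ?S)"
    unfolding prob_xi_def using measure_pmf_of_set[OF ne fin] by simp
  also have "\<dots> = real (card {w \<in> Om d V. P w}) * real (card V) ^ (n - 2 * d) / real (card V) ^ n"
  proof -
    have c1: "card {\<xi> \<in> ?S. P (Phi H d \<xi>)} = card {w \<in> Om d V. P w} * card V ^ (n - 2 * d)"
      by (rule count_Phi[OF bf V(1)])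
    have c2: "card ?S = card V ^ n" by (simp add: card_PiE)
    show ?thesis unfolding c1 c2 by simp
  qed
  also have "real (card V) ^ n = real (card V) ^ (2 * d) * real (card V) ^ (n - 2 * d)"
    using n by (simp add: power_add[symmetric])
  also have "real (card {w \<in> Om d V. P w}) * real (card V) ^ (n - 2 * d) / (real (card V) ^ (2 * d) * real (card V) ^ (n - 2 * d))
      = real (card {w \<in> Om d V. P w}) / real (card V) ^ (2 * d)"
    using V by (simp add: card_gt_0_iff)
  finally show ?thesis .
qed

lemma prod_indicator_if:
  "(\<Prod>x\<in>A. indicator S (p x) :: real) = (if \<forall>x\<in>A. p x \<in> S then 1 else 0)" if "finite A"
proof (cases "\<forall>x\<in>A. p x \<in> S")
  case True
  then show ?thesis by (simp add: indicator_def)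
next
  case False
  then obtain x where "x \<in> A" "p x \<notin> S" by auto
  then show ?thesis using that by (auto simp: indicator_def prod_zero_iff)
qed

lemma card_filter_sum:
  "finite A \<Longrightarrow> real (card {x \<in> A. R x}) = (\<Sum>x\<in>A. if R x then 1 else 0)"
  by (simp add: sum.inter_filter[symmetric])

lemma box_family_exists:
  assumes "2 * d \<le> n"
  shows "box_family d n (\<lambda>i. {2 * i + 1, 2 * i + 2})"
  using assms by (auto simp: box_family_def)

lemma box_indep_iff:
  fixes V :: "'a set"
  assumes V: "finite V" "V \<noteq> {}" and d: "0 < d" and n: "2 * d \<le> n"
  shows "box_independent d V G n \<theta> \<longleftrightarrow>
    box_norm d V (indicator (curlyG d V G)) ^ (2 ^ d) \<le> avg d V (indicator (curlyG d V G)) ^ (2 ^ d) + \<theta>"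
proof -
  let ?f = "indicator (curlyG d V G) :: (nat \<Rightarrow> 'a) \<Rightarrow> real"
  let ?K = "real (card V) ^ (2 * d)"
  have K0: "0 < ?K" using V by (simp add: card_gt_0_iff)
  have key: "prob_xi n V (\<lambda>\<xi>. \<forall>s\<in>box d n H. Xarr d V G \<xi> s = 1) = box_norm d V ?f ^ (2 ^ d)
     \<and> (\<Prod>s\<in>box d n H. prob_xi n V (\<lambda>\<xi>. Xarr d V G \<xi> s = 1)) = avg d V ?f ^ (2 ^ d)"
    if bf: "box_family d n H" for H
  proof
    have ev: "(\<forall>s\<in>box d n H. Xarr d V G \<xi> s = 1) \<longleftrightarrow> (\<forall>\<epsilon>\<in>Es d. pt d (Phi H d \<xi>) \<epsilon> \<in> curlyG d V G)" for \<xi>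
      unfolding box_eq[OF bf] by (simp add: Xarr_sset[OF bf] indicator_def)
    have "prob_xi n V (\<lambda>\<xi>. \<forall>s\<in>box d n H. Xarr d V G \<xi> s = 1)
        = prob_xi n V (\<lambda>\<xi>. (\<lambda>w. \<forall>\<epsilon>\<in>Es d. pt d w \<epsilon> \<in> curlyG d V G) (Phi H d \<xi>))"
      by (simp only: ev)
    also have "\<dots> = real (card {w \<in> Om d V. \<forall>\<epsilon>\<in>Es d. pt d w \<epsilon> \<in> curlyG d V G}) / ?K"
      by (rule prob_Phi[OF bf V n])
    also have "real (card {w \<in> Om d V. \<forall>\<epsilon>\<in>Es d. pt d w \<epsilon> \<in> curlyG d V G}) = gip d V (\<lambda>_. ?f)"
      unfolding gip_def card_filter_sum[OF finite_Om[OF V(1)]]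
      by (rule sum.cong[OF refl]) (simp add: prod_indicator_if[OF finite_Es])
    also have "gip d V (\<lambda>_. ?f) / ?K = box_norm d V ?f ^ (2 ^ d)"
      by (simp add: box_norm_pow[OF V(1) d])
    finally show "prob_xi n V (\<lambda>\<xi>. \<forall>s\<in>box d n H. Xarr d V G \<xi> s = 1) = box_norm d V ?f ^ (2 ^ d)" .
    have single: "prob_xi n V (\<lambda>\<xi>. Xarr d V G \<xi> (sset H d \<epsilon>) = 1) = avg d V ?f" if e: "\<epsilon> \<in> Es d" for \<epsilon>
    proof -
      have "prob_xi n V (\<lambda>\<xi>. Xarr d V G \<xi> (sset H d \<epsilon>) = 1)
          = prob_xi n V (\<lambda>\<xi>. (\<lambda>w. pt d w \<epsilon> \<in> curlyG d V G) (Phi H d \<xi>))"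
        by (simp add: Xarr_sset[OF bf] indicator_def)
      also have "\<dots> = real (card {w \<in> Om d V. pt d w \<epsilon> \<in> curlyG d V G}) / ?K"
        by (rule prob_Phi[OF bf V n])
      also have "real (card {w \<in> Om d V. pt d w \<epsilon> \<in> curlyG d V G}) = (\<Sum>w\<in>Om d V. ?f (pt d w \<epsilon>))"
        unfolding card_filter_sum[OF finite_Om[OF V(1)]]
        by (rule sum.cong[OF refl]) (simp add: indicator_def)
      also have "\<dots> = real (card V) ^ d * (\<Sum>v\<in>tuples d V. ?f v)"
        by (rule sum_pt[OF V(1) e])
      also have "real (card V) ^ d * (\<Sum>v\<in>tuples d V. ?f v) / ?K = avg d V ?f"
        using K0 V by (simp add: avg_def power_add mult_2 card_gt_0_iff)
      finally show ?thesis .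
    qed
    have "(\<Prod>s\<in>box d n H. prob_xi n V (\<lambda>\<xi>. Xarr d V G \<xi> s = 1))
        = (\<Prod>\<epsilon>\<in>Es d. prob_xi n V (\<lambda>\<xi>. Xarr d V G \<xi> (sset H d \<epsilon>) = 1))"
      unfolding box_eq[OF bf] using prod.reindex[OF inj_sset[OF bf]] by (simp add: comp_def)
    also have "\<dots> = (\<Prod>\<epsilon>\<in>Es d. avg d V ?f)"
      by (rule prod.cong[OF refl]) (rule single)
    also have "\<dots> = avg d V ?f ^ (2 ^ d)" by (simp add: card_Es)
    finally show "(\<Prod>s\<in>box d n H. prob_xi n V (\<lambda>\<xi>. Xarr d V G \<xi> s = 1)) = avg d V ?f ^ (2 ^ d)" .
  qed
  show ?thesis
  proof
    assume bi: "box_independent d V G n \<theta>"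
    let ?H0 = "\<lambda>i. {2 * i + 1, 2 * i + 2}"
    have bf0: "box_family d n ?H0" by (rule box_family_exists[OF n])
    have "prob_xi n V (\<lambda>\<xi>. \<forall>s\<in>box d n ?H0. Xarr d V G \<xi> s = 1)
          \<le> (\<Prod>s\<in>box d n ?H0. prob_xi n V (\<lambda>\<xi>. Xarr d V G \<xi> s = 1)) + \<theta>"
      using bi bf0 unfolding box_independent_def by blast
    then show "box_norm d V ?f ^ (2 ^ d) \<le> avg d V ?f ^ (2 ^ d) + \<theta>"
      using key[OF bf0] by simp
  next
    assume "box_norm d V ?f ^ (2 ^ d) \<le> avg d V ?f ^ (2 ^ d) + \<theta>"
    then show "box_independent d V G n \<theta>"
      unfolding box_independent_def using key by auto
  qed
qed



lemma avg_le1: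
  assumes V: "finite V" "V \<noteq> {}" and f: "\<And>x. f x \<le> 1"
  shows "avg d V f \<le> 1"
proof -
  have "(\<Sum>v\<in>tuples d V. f v) \<le> (\<Sum>v\<in>tuples d V. 1)" by (rule sum_mono) (rule f)
  also have "\<dots> = real (card V) ^ d" by (simp add: card_tuples[OF V(1)])
  finally show ?thesis using V by (simp add: avg_def card_gt_0_iff)
qed

lemma unif_to_indep:
  fixes V :: "'a set" and f :: "(nat \<Rightarrow> 'a) \<Rightarrow> real"
  assumes V: "finite V" "V \<noteq> {}" and d: "0 < d"
    and f0: "\<And>x. 0 \<le> f x" and f1: "\<And>x. f x \<le> 1"
    and bu: "box_norm d V (\<lambda>x. f x - avg d V f) \<le> \<rho>"
  shows "box_norm d V f ^ (2 ^ d) \<le> avg d V f ^ (2 ^ d) + 2 ^ d * \<rho>"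
proof -
  define N where "N = (2::nat) ^ d"
  define \<delta> where "\<delta> = avg d V f"
  define a where "a = box_norm d V f"
  have \<delta>0: "0 \<le> \<delta>" unfolding \<delta>_def by (rule avg_nonneg) (rule f0)
  have \<delta>a: "\<delta> \<le> a" using avg_le_box_norm[OF V d, of f] by (simp add: \<delta>_def a_def)
  have a1: "a \<le> 1" unfolding a_def by (rule box_norm_le1[OF V]) (use f0 f1 in auto)
  have "f = (\<lambda>x. (\<lambda>x. f x - \<delta>) x + (\<lambda>_. \<delta>) x)" by (rule ext) simp
  then have "a \<le> box_norm d V (\<lambda>x. f x - \<delta>) + box_norm d V (\<lambda>_. \<delta>)"
    unfolding a_def using box_norm_triangle[OF V d, of "\<lambda>x. f x - \<delta>" "\<lambda>_. \<delta>"] by simp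
  also have "\<dots> \<le> \<rho> + \<delta>" using bu box_norm_const[OF V d \<delta>0] by (simp add: \<delta>_def)
  finally have a\<rho>: "a - \<delta> \<le> \<rho>" by simp
  have "a ^ N - \<delta> ^ N = (a - \<delta>) * (\<Sum>i<N. \<delta> ^ (N - Suc i) * a ^ i)"
    by (rule power_diff_sumr2)
  also have "\<dots> \<le> (a - \<delta>) * real N"
  proof (rule mult_left_mono)
    have "(\<Sum>i<N. \<delta> ^ (N - Suc i) * a ^ i) \<le> real (card {..<N}) * 1"
    proof (rule sum_bounded_above)
      fix i
      have "\<delta> ^ (N - Suc i) \<le> 1" using \<delta>0 \<delta>a a1 by (intro power_le_one) auto
      moreover have "a ^ i \<le> 1" using \<delta>0 \<delta>a a1 by (intro power_le_one) auto
      moreover have "0 \<le> a ^ i" using \<delta>0 \<delta>a by simp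
      ultimately show "\<delta> ^ (N - Suc i) * a ^ i \<le> 1" by (simp add: mult_le_one)
    qed
    then show "(\<Sum>i<N. \<delta> ^ (N - Suc i) * a ^ i) \<le> real N" by simp
  qed (use \<delta>a in simp)
  also have "\<dots> \<le> \<rho> * real N" by (rule mult_right_mono[OF a\<rho>]) simp
  finally show ?thesis by (simp add: N_def a_def \<delta>_def mult.commute)
qed

theorem proposition8p2:
  fixes d :: nat and V :: "'a set" and G :: "'a set set" and \<rho> \<theta> :: real
  assumes "d \<ge> 2" and "finite V" and "card V \<ge> d"
    and "uniform_hypergraph d V G"
    and "\<rho> > 0" and "\<theta> > 0"
  shows "(box_uniform d V G \<rho> \<longrightarrow>
            (\<forall>n\<ge>2*d. box_independent d V G n (2 ^ d * \<rho>)))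
       \<and> ((\<exists>n\<ge>2*d. box_independent d V G n \<theta>) \<longleftrightarrow>
            (\<forall>n\<ge>2*d. box_independent d V G n \<theta>))
       \<and> ((\<exists>n\<ge>2*d. box_independent d V G n \<theta>) \<longrightarrow>
            box_uniform d V G (12 * \<theta> powr (1 / 8 ^ d)))"
proof -
  let ?f = "indicator (curlyG d V G) :: (nat \<Rightarrow> 'a) \<Rightarrow> real"
  let ?N = "2 ^ d :: nat"
  have V: "finite V" "V \<noteq> {}" using assms(1-3) by auto
  have d: "0 < d" using assms(1) by simp
  have f0: "\<And>x. 0 \<le> ?f x" and f1: "\<And>x. ?f x \<le> 1" by (auto simp: indicator_def)
  define cond where "cond = (\<lambda>t. box_norm d V ?f ^ ?N \<le> avg d V ?f ^ ?N + t)"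
  have iff: "box_independent d V G n t \<longleftrightarrow> cond t" if "2 * d \<le> n" for n t
    unfolding cond_def by (rule box_indep_iff[OF V d that])
  have part1: "box_uniform d V G \<rho> \<longrightarrow> (\<forall>n\<ge>2*d. box_independent d V G n (2 ^ d * \<rho>))"
  proof (intro impI allI)
    fix n :: nat assume bu: "box_uniform d V G \<rho>" and n: "2 * d \<le> n"
    have "box_norm d V (\<lambda>x. ?f x - avg d V ?f) \<le> \<rho>" using bu by (simp add: box_uniform_def)
    then have "cond (2 ^ d * \<rho>)" unfolding cond_def by (rule unif_to_indep[OF V d f0 f1])
    then show "box_independent d V G n (2 ^ d * \<rho>)" using iff[OF n] by simp
  qed
  have part2: "(\<exists>n\<ge>2*d. box_independent d V G n \<theta>) \<longleftrightarrow> (\<forall>n\<ge>2*d. box_independent d V G n \<theta>)"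
  proof
    assume "\<exists>n\<ge>2*d. box_independent d V G n \<theta>"
    then have "cond \<theta>" using iff by blast
    then show "\<forall>n\<ge>2*d. box_independent d V G n \<theta>" using iff by blast
  next
    assume "\<forall>n\<ge>2*d. box_independent d V G n \<theta>"
    then show "\<exists>n\<ge>2*d. box_independent d V G n \<theta>" by blast
  qed
  have part3: "(\<exists>n\<ge>2*d. box_independent d V G n \<theta>) \<longrightarrow> box_uniform d V G (12 * \<theta> powr (1 / 8 ^ d))"
  proof
    assume "\<exists>n\<ge>2*d. box_independent d V G n \<theta>"
    then have c: "cond \<theta>" using iff by blast
    let ?g = "\<lambda>x. ?f x - avg d V ?f"
    have gb: "box_norm d V ?g ^ ?N \<le> 6 ^ ?N * \<theta>"
    proof -
      have c': "box_norm d V ?f ^ (2 ^ d) \<le> avg d V ?f ^ (2 ^ d) + \<theta>" using c unfolding cond_def .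
      show ?thesis by (rule gap_bound[OF V d f0 f1 c'])
    qed
    have g0: "0 \<le> box_norm d V ?g" by (rule box_norm_nonneg[OF V(1) d])
    have "box_norm d V ?g = root ?N (box_norm d V ?g ^ ?N)"
      using g0 by (simp add: real_root_power_cancel)
    also have "\<dots> \<le> root ?N (6 ^ ?N * \<theta>)" using gb by (simp add: real_root_le_mono)
    also have "\<dots> = 6 * root ?N \<theta>" by (simp add: real_root_mult real_root_power_cancel)
    also have "root ?N \<theta> = \<theta> powr (1 / real ?N)"
      using assms(6) by (simp add: root_powr_inverse)
    finally have b6: "box_norm d V ?g \<le> 6 * \<theta> powr (1 / real ?N)" .
    have "box_norm d V ?g \<le> 12 * \<theta> powr (1 / 8 ^ d)"
    proof (cases "\<theta> \<le> 1")
      case True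
      have "(2::real) ^ d \<le> 8 ^ d" by (rule power_mono) auto
      then have "1 / (8::real) ^ d \<le> 1 / 2 ^ d" by (simp add: frac_le)
      then have "\<theta> powr (1 / real ?N) \<le> \<theta> powr (1 / 8 ^ d)"
        using True assms(6) by (simp add: powr_mono')
      moreover have "0 \<le> \<theta> powr (1 / 8 ^ d)" by simp
      ultimately show ?thesis using b6 by linarith
    next
      case False
      have "avg d V ?f \<le> 1" by (rule avg_le1[OF V f1])
      moreover have "0 \<le> avg d V ?f" by (rule avg_nonneg) (rule f0)
      ultimately have "\<And>x. \<bar>?g x\<bar> \<le> 1" using f0 f1 by (simp add: abs_le_iff) (smt (verit) f0 f1)
      then have "box_norm d V ?g \<le> 1" by (rule box_norm_le1[OF V])
      moreover have "1 \<le> \<theta> powr (1 / 8 ^ d)" using False by (intro ge_one_powr_ge_zero) auto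
      ultimately show ?thesis by linarith
    qed
    then show "box_uniform d V G (12 * \<theta> powr (1 / 8 ^ d))" by (simp add: box_uniform_def)
  qed
  show ?thesis using part1 part2 part3 by blast
qed

end
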